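(* Let $\mathcal{A}$ be a finite list of elements of a finitely generated abelian group $\Gamma$ and let $G$ be a finite abelian group. Then $\#\mathcal{M}(\mathcal{A};\Gamma,G)=\chi^G_{\mathcal{A}}(\#G)$.
   Context: $\mathcal{M}(\mathcal{A};\Gamma,G)=\mathrm{Hom}(\Gamma,G)\smallsetminus\bigcup_{\alpha\in\mathcal{A}}\{\varphi\mid\varphi(\alpha)=0\}$. $r_\Gamma$ is the rank of $\Gamma$, $r_{\mathcal{S}}$ the rank of $\langle\mathcal{S}\rangle$, $m(\mathcal{S};G)=\#\mathrm{Hom}((\Gamma/\langle\mathcal{S}\rangle)_{\mathrm{tor}},G)$ and $\chi^G_{\mathcal{A}}(t)=\sum_{\mathcal{S}\subset\mathcal{A}}(-1)^{\#\mathcal{S}}m(\mathcal{S};G)t^{r_\Gamma-r_{\mathcal{S}}}$ (sublists distinguished by index). *)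

theory Defs
  imports "HOL-Algebra.Algebra" "HOL-Computational_Algebra.Polynomial"
begin

text \<open>Abelian groups are written multiplicatively (HOL-Algebra); the paper's
  0 of G is the unit of G.\<close>

definition fin_gen :: "('a, 'b) monoid_scheme \<Rightarrow> bool" where
  "fin_gen \<Gamma> \<longleftrightarrow> (\<exists>S. finite S \<and> S \<subseteq> carrier \<Gamma> \<and> generate \<Gamma> S = carrier \<Gamma>)"

definition int_indep :: "('a, 'b) monoid_scheme \<Rightarrow> nat \<Rightarrow> (nat \<Rightarrow> 'a) \<Rightarrow> bool" where
  "int_indep \<Gamma> k f \<longleftrightarrow>
     (\<forall>c :: nat \<Rightarrow> int. finprod \<Gamma> (\<lambda>i. f i [^]\<^bsub>\<Gamma>\<^esub> c i) {..<k} = \<one>\<^bsub>\<Gamma>\<^esub> \<longrightarrow> (\<forall>i<k. c i = 0))"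

definition grp_rank :: "('a, 'b) monoid_scheme \<Rightarrow> 'a set \<Rightarrow> nat" where
  "grp_rank \<Gamma> H = Max {k. \<exists>f. (\<forall>i<k. f i \<in> H) \<and> int_indep \<Gamma> k f}"

definition torsion_subgroup :: "('a, 'b) monoid_scheme \<Rightarrow> 'a set" where
  "torsion_subgroup \<Gamma> = {x \<in> carrier \<Gamma>. \<exists>n::nat. n > 0 \<and> x [^]\<^bsub>\<Gamma>\<^esub> n = \<one>\<^bsub>\<Gamma>\<^esub>}"

definition Hom :: "('a, 'b) monoid_scheme \<Rightarrow> ('c, 'd) monoid_scheme \<Rightarrow> ('a \<Rightarrow> 'c) set" where
  "Hom A B = hom A B \<inter> extensional (carrier A)"

definition M_set :: "'a list \<Rightarrow> ('a, 'b) monoid_scheme \<Rightarrow> ('c, 'd) monoid_scheme \<Rightarrow> ('a \<Rightarrow> 'c) set" where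
  "M_set \<A> \<Gamma> G = {\<phi> \<in> Hom \<Gamma> G. \<forall>\<alpha> \<in> set \<A>. \<phi> \<alpha> \<noteq> \<one>\<^bsub>G\<^esub>}"

text \<open>Sublists are given by index sets I \<subseteq> {..<length A}.\<close>
definition sub_span :: "'a list \<Rightarrow> ('a, 'b) monoid_scheme \<Rightarrow> nat set \<Rightarrow> 'a set" where
  "sub_span \<A> \<Gamma> I = generate \<Gamma> ((\<lambda>i. \<A> ! i) ` I)"

definition m_count :: "'a list \<Rightarrow> ('a, 'b) monoid_scheme \<Rightarrow> ('c, 'd) monoid_scheme \<Rightarrow> nat set \<Rightarrow> nat" where
  "m_count \<A> \<Gamma> G I =
     (let Q = \<Gamma> Mod (sub_span \<A> \<Gamma> I)
      in card (Hom (Q\<lparr>carrier := torsion_subgroup Q\<rparr>) G))"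

definition char_poly :: "'a list \<Rightarrow> ('a, 'b) monoid_scheme \<Rightarrow> ('c, 'd) monoid_scheme \<Rightarrow> int poly" where
  "char_poly \<A> \<Gamma> G =
     (\<Sum>I \<in> Pow {..<length \<A>}.
        monom ((-1) ^ card I * int (m_count \<A> \<Gamma> G I))
              (grp_rank \<Gamma> (carrier \<Gamma>) - grp_rank \<Gamma> (sub_span \<A> \<Gamma> I)))"

end

theory Submission
  imports Defs
begin



definition lcomb :: "('a, 'b) monoid_scheme \<Rightarrow> ('i \<Rightarrow> 'a) \<Rightarrow> ('i \<Rightarrow> int) \<Rightarrow> 'i set \<Rightarrow> 'a" where
  "lcomb G x c I = finprod G (\<lambda>i. x i [^]\<^bsub>G\<^esub> c i) I"

definition indep :: "('a, 'b) monoid_scheme \<Rightarrow> ('i \<Rightarrow> 'a) \<Rightarrow> 'i set \<Rightarrow> bool" where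
  "indep G x I \<longleftrightarrow> (\<forall>c. lcomb G x c I = \<one>\<^bsub>G\<^esub> \<longrightarrow> (\<forall>i\<in>I. c i = 0))"

context comm_group
begin

lemma lcomb_closed [intro, simp]: "x ` I \<subseteq> carrier G \<Longrightarrow> lcomb G x c I \<in> carrier G"
  unfolding lcomb_def by (intro finprod_closed) auto

lemma lcomb_empty [simp]: "lcomb G x c {} = \<one>"
  unfolding lcomb_def by simp

lemma lcomb_insert:
  assumes "finite I" "i \<notin> I" "x ` insert i I \<subseteq> carrier G"
  shows "lcomb G x c (insert i I) = x i [^] c i \<otimes> lcomb G x c I"
  unfolding lcomb_def using assms by (subst finprod_insert) auto

lemma lcomb_cong:
  assumes "\<And>i. i \<in> I \<Longrightarrow> c i = d i" "x ` I \<subseteq> carrier G"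
  shows "lcomb G x c I = lcomb G x d I"
  unfolding lcomb_def using assms by (intro finprod_cong') auto

lemma lcomb_cong2:
  assumes "\<And>i. i \<in> I \<Longrightarrow> x i [^] c i = y i [^] d i" "y ` I \<subseteq> carrier G"
  shows "lcomb G x c I = lcomb G y d I"
  unfolding lcomb_def using assms by (intro finprod_cong') auto

lemma lcomb_zero [simp]: "lcomb G x (\<lambda>_. 0) I = \<one>"
  unfolding lcomb_def by simp

lemma lcomb_add:
  assumes "x ` I \<subseteq> carrier G"
  shows "lcomb G x (\<lambda>i. c i + d i) I = lcomb G x c I \<otimes> lcomb G x d I"
  unfolding lcomb_def using assms
  by (subst finprod_multf[symmetric]) (auto intro!: finprod_cong' int_pow_mult)

lemma lcomb_pow:
  assumes "x ` I \<subseteq> carrier G"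
  shows "lcomb G x c I [^] (k::int) = lcomb G x (\<lambda>i. k * c i) I"
proof (cases "finite I")
  case True
  then show ?thesis using assms
  proof (induction I rule: finite_induct)
    case empty
    then show ?case by simp
  next
    case (insert i I)
    have xi: "x i \<in> carrier G" using insert by auto
    have "lcomb G x c (insert i I) [^] k = (x i [^] c i \<otimes> lcomb G x c I) [^] k"
      using insert by (simp add: lcomb_insert)
    also have "\<dots> = (x i [^] c i) [^] k \<otimes> lcomb G x c I [^] k"
      using insert xi by (intro int_pow_distrib) auto
    also have "\<dots> = x i [^] (k * c i) \<otimes> lcomb G x (\<lambda>i. k * c i) I"
      using insert xi by (simp add: int_pow_pow mult.commute)
    also have "\<dots> = lcomb G x (\<lambda>i. k * c i) (insert i I)"
      using insert by (simp add: lcomb_insert)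
    finally show ?case .
  qed
next
  case False
  then show ?thesis by (simp add: lcomb_def)
qed

lemma lcomb_neg:
  assumes "x ` I \<subseteq> carrier G"
  shows "lcomb G x (\<lambda>i. - c i) I = inv (lcomb G x c I)"
proof -
  have "lcomb G x c I [^] (-1::int) = inv (lcomb G x c I)"
    using assms by (simp add: int_pow_neg)
  then show ?thesis using lcomb_pow[OF assms, of c "-1"] by simp
qed

lemma lcomb_diff:
  assumes "x ` I \<subseteq> carrier G"
  shows "lcomb G x (\<lambda>i. c i - d i) I = lcomb G x c I \<otimes> inv (lcomb G x d I)"
  using lcomb_add[OF assms, of c "\<lambda>i. - d i"] lcomb_neg[OF assms, of d] by simp

lemma lcomb_delta:
  assumes "finite I" "a \<in> I" "x ` I \<subseteq> carrier G"
  shows "lcomb G x (\<lambda>i. if i = a then 1 else 0) I = x a"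
proof -
  have I: "I = insert a (I - {a})" using assms by auto
  have "lcomb G x (\<lambda>i. if i = a then 1 else 0) I = x a [^] (1::int) \<otimes> lcomb G x (\<lambda>i. if i = a then 1 else 0) (I - {a})"
    using assms by (subst I, subst lcomb_insert) auto
  also have "lcomb G x (\<lambda>i. if i = a then 1 else 0) (I - {a}) = lcomb G x (\<lambda>_. 0) (I - {a})"
    using assms by (intro lcomb_cong) auto
  finally show ?thesis using assms by auto
qed

lemma lcomb_comp:
  assumes "finite I" "x ` I \<subseteq> carrier G" "w ` J \<subseteq> carrier G"
    and "\<And>i. i \<in> I \<Longrightarrow> x i = lcomb G w (C i) J"
  shows "lcomb G x d I = lcomb G w (\<lambda>j. \<Sum>i\<in>I. d i * C i j) J"
  using assms
proof (induction I rule: finite_induct)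
  case empty
  then show ?case by simp
next
  case (insert i I)
  have "lcomb G x d (insert i I) = x i [^] d i \<otimes> lcomb G x d I"
    using insert by (simp add: lcomb_insert)
  also have "\<dots> = lcomb G w (\<lambda>j. d i * C i j) J \<otimes> lcomb G w (\<lambda>j. \<Sum>i\<in>I. d i * C i j) J"
    using insert by (simp add: lcomb_pow)
  also have "\<dots> = lcomb G w (\<lambda>j. \<Sum>i\<in>insert i I. d i * C i j) J"
    using insert by (simp add: lcomb_add)
  finally show ?case .
qed

lemma lcomb_hom:
  assumes "comm_group H" "h \<in> hom G H" "x ` I \<subseteq> carrier G"
  shows "h (lcomb G x c I) = lcomb H (\<lambda>i. h (x i)) c I"
proof -
  interpret H: comm_group H by fact
  interpret gh: group_hom G H h using assms by (simp add: group_hom_def group_hom_axioms_def is_group)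
  show ?thesis
  proof (cases "finite I")
    case True
    then show ?thesis using assms(3)
    proof (induction I rule: finite_induct)
      case empty
      then show ?case by simp
    next
      case (insert i I)
      have hx: "(\<lambda>i. h (x i)) ` insert i I \<subseteq> carrier H" using insert by auto
      show ?case using insert hx
        by (simp add: lcomb_insert H.lcomb_insert gh.hom_int_pow)
    qed
  next
    case False
    then show ?thesis by (simp add: lcomb_def)
  qed
qed

end




lemma int_dep:
  fixes C :: "'i \<Rightarrow> 'j \<Rightarrow> int"
  assumes "finite J" "finite I" "card I > card J"
  shows "\<exists>d. (\<exists>i\<in>I. d i \<noteq> 0) \<and> (\<forall>j\<in>J. (\<Sum>i\<in>I. d i * C i j) = 0)"
  using assms
proof (induction J arbitrary: I C rule: finite_induct)
  case empty
  then have "I \<noteq> {}" by auto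
  then show ?case by (intro exI[of _ "\<lambda>_. 1"]) auto
next
  case (insert p J)
  show ?case
  proof (cases "\<forall>i\<in>I. C i p = 0")
    case True
    from insert have "card I > card J" by simp
    from insert.IH[OF insert.prems(1) this, of C] obtain d where
      d: "\<exists>i\<in>I. d i \<noteq> 0" "\<forall>j\<in>J. (\<Sum>i\<in>I. d i * C i j) = 0" by blast
    show ?thesis using d True by (intro exI[of _ d]) auto
  next
    case False
    then obtain i0 where i0: "i0 \<in> I" "C i0 p \<noteq> 0" by auto
    define a where "a = C i0 p"
    define I' where "I' = I - {i0}"
    define D where "D i j = a * C i j - C i p * C i0 j" for i j
    have fI': "finite I'" using insert by (simp add: I'_def)
    have "card I' > card J" using insert i0 by (simp add: I'_def)
    from insert.IH[OF fI' this, of D] obtain d' where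
      d': "\<exists>i\<in>I'. d' i \<noteq> 0" "\<forall>j\<in>J. (\<Sum>i\<in>I'. d' i * D i j) = 0" by blast
    define d where "d i = (if i = i0 then - (\<Sum>k\<in>I'. d' k * C k p) else a * d' i)" for i
    have I: "I = insert i0 I'" using i0 by (auto simp: I'_def)
    have i0I': "i0 \<notin> I'" by (simp add: I'_def)
    have key: "(\<Sum>i\<in>I. d i * C i j) = (\<Sum>i\<in>I'. d' i * D i j)" for j
    proof -
      have "(\<Sum>i\<in>I. d i * C i j) = d i0 * C i0 j + (\<Sum>i\<in>I'. d i * C i j)"
        using fI' i0I' by (subst I) simp
      also have "(\<Sum>i\<in>I'. d i * C i j) = (\<Sum>i\<in>I'. a * d' i * C i j)"
        using i0I' by (intro sum.cong) (auto simp: d_def)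
      also have "d i0 * C i0 j = - (\<Sum>k\<in>I'. d' k * C k p * C i0 j)"
        by (simp add: d_def sum_distrib_right)
      finally have "(\<Sum>i\<in>I. d i * C i j) = (\<Sum>i\<in>I'. a * d' i * C i j) - (\<Sum>k\<in>I'. d' k * C k p * C i0 j)"
        by (simp add: sum_negf)
      also have "\<dots> = (\<Sum>i\<in>I'. a * d' i * C i j - d' i * C i p * C i0 j)"
        by (simp add: sum_subtractf)
      also have "\<dots> = (\<Sum>i\<in>I'. d' i * D i j)"
        by (intro sum.cong) (auto simp: D_def algebra_simps)
      finally show ?thesis .
    qed
    show ?thesis
    proof (intro exI[of _ d] conjI)
      from d'(1) obtain i where "i \<in> I'" "d' i \<noteq> 0" by auto
      then show "\<exists>i\<in>I. d i \<noteq> 0" using i0 by (intro bexI[of _ i]) (auto simp: d_def a_def I'_def)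
      show "\<forall>j\<in>insert p J. (\<Sum>i\<in>I. d i * C i j) = 0"
      proof
        fix j assume "j \<in> insert p J"
        then show "(\<Sum>i\<in>I. d i * C i j) = 0"
        proof
          assume "j = p"
          then show ?thesis unfolding key by (simp add: D_def a_def)
        next
          assume "j \<in> J"
          then show ?thesis unfolding key using d'(2) by simp
        qed
      qed
    qed
  qed
qed

context comm_group
begin

lemma indep_card_le:
  assumes "finite I" "finite J" "x ` I \<subseteq> carrier G" "w ` J \<subseteq> carrier G"
    and "indep G x I" and "\<And>i. i \<in> I \<Longrightarrow> \<exists>c. x i = lcomb G w c J"
  shows "card I \<le> card J"
proof (rule ccontr)
  assume "\<not> ?thesis"
  then have lt: "card I > card J" by simp
  define C where "C i = (SOME c. x i = lcomb G w c J)" for i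
  have C: "x i = lcomb G w (C i) J" if "i \<in> I" for i
    using someI_ex[OF assms(6)[OF that]] by (simp add: C_def)
  from int_dep[OF assms(2,1) lt, of C] obtain d where
    d: "\<exists>i\<in>I. d i \<noteq> 0" "\<forall>j\<in>J. (\<Sum>i\<in>I. d i * C i j) = 0" by blast
  have "lcomb G x d I = lcomb G w (\<lambda>j. \<Sum>i\<in>I. d i * C i j) J"
    using assms C by (intro lcomb_comp) auto
  also have "\<dots> = lcomb G w (\<lambda>_. 0) J"
    using d(2) assms by (intro lcomb_cong) auto
  finally have "lcomb G x d I = \<one>" by simp
  with assms(5) d(1) show False unfolding indep_def by blast
qed

lemma indep_pow:
  assumes "x ` I \<subseteq> carrier G" "indep G x I" "\<And>i. i \<in> I \<Longrightarrow> n i \<noteq> 0"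
  shows "indep G (\<lambda>i. x i [^] (n i :: int)) I"
  unfolding indep_def
proof (intro allI impI ballI)
  fix c i assume c: "lcomb G (\<lambda>i. x i [^] n i) c I = \<one>" and i: "i \<in> I"
  have "lcomb G (\<lambda>i. x i [^] n i) c I = lcomb G x (\<lambda>i. n i * c i) I"
    using assms by (intro lcomb_cong2) (auto simp: int_pow_pow)
  with c have "lcomb G x (\<lambda>i. n i * c i) I = \<one>" by simp
  then have "n i * c i = 0" using assms(2) i unfolding indep_def by blast
  with assms(3)[OF i] show "c i = 0" by simp
qed

lemma indep_card_le':
  assumes "finite I" "finite J" "x ` I \<subseteq> carrier G" "w ` J \<subseteq> carrier G"
    and "indep G x I" and "\<And>i. i \<in> I \<Longrightarrow> \<exists>n c. n \<noteq> 0 \<and> x i [^] (n::int) = lcomb G w c J"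
  shows "card I \<le> card J"
proof -
  define n where "n i = (SOME n. n \<noteq> 0 \<and> (\<exists>c. x i [^] (n::int) = lcomb G w c J))" for i
  have n: "n i \<noteq> 0 \<and> (\<exists>c. x i [^] n i = lcomb G w c J)" if "i \<in> I" for i
    using someI_ex[of "\<lambda>n. n \<noteq> 0 \<and> (\<exists>c. x i [^] (n::int) = lcomb G w c J)"] assms(6)[OF that]
    unfolding n_def by blast
  show ?thesis
    using assms n by (intro indep_card_le[where x = "\<lambda>i. x i [^] n i" and w = w]) (auto intro!: indep_pow)
qed

lemma indep_reindex:
  assumes "bij_betw h A B" "x ` B \<subseteq> carrier G" "indep G x B"
  shows "indep G (x \<circ> h) A"
  unfolding indep_def
proof (intro allI impI ballI)
  fix c a assume c: "lcomb G (x \<circ> h) c A = \<one>" and a: "a \<in> A"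
  define c' where "c' = c \<circ> inv_into A h"
  have "lcomb G x c' B = lcomb G x c' (h ` A)" using assms(1) by (simp add: bij_betw_def)
  also have "\<dots> = finprod G (\<lambda>i. x (h i) [^] c' (h i)) A"
    unfolding lcomb_def using assms by (subst finprod_reindex) (auto simp: bij_betw_def)
  also have "\<dots> = lcomb G (x \<circ> h) c A"
    unfolding lcomb_def c'_def using assms(1,2)
    by (intro finprod_cong') (auto simp: bij_betw_def bij_betw_apply)
  finally have "lcomb G x c' B = \<one>" using c by simp
  with assms(3) have "c' (h a) = 0" unfolding indep_def using a assms(1) by (auto simp: bij_betw_def)
  then show "c a = 0" using a assms(1) by (simp add: c'_def bij_betw_def)
qed

end




definition fgen :: "('a, 'b) monoid_scheme \<Rightarrow> ('i \<Rightarrow> 'a) \<Rightarrow> 'i set \<Rightarrow> bool" where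
  "fgen G w J \<longleftrightarrow> finite J \<and> w ` J \<subseteq> carrier G \<and> (\<forall>x\<in>carrier G. \<exists>c. x = lcomb G w c J)"

lemma int_indep_iff: "int_indep G k f \<longleftrightarrow> indep G f {..<k}"
  unfolding int_indep_def indep_def lcomb_def by auto

lemma rank_props:
  assumes bdd: "\<And>m f. (\<forall>i<m. f i \<in> S) \<Longrightarrow> int_indep G m f \<Longrightarrow> m \<le> B"
  shows "\<exists>f. (\<forall>i<grp_rank G S. f i \<in> S) \<and> int_indep G (grp_rank G S) f"
    and "\<And>m f. (\<forall>i<m. f i \<in> S) \<Longrightarrow> int_indep G m f \<Longrightarrow> m \<le> grp_rank G S"
proof -
  let ?K = "{k. \<exists>f. (\<forall>i<k. f i \<in> S) \<and> int_indep G k f}"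
  have fin: "finite ?K" using bdd by (intro finite_nat_set_iff_bounded_le[THEN iffD2]) blast
  have "0 \<in> ?K" by (auto simp: int_indep_def)
  then have ne: "?K \<noteq> {}" by auto
  have "grp_rank G S \<in> ?K" unfolding grp_rank_def using fin ne by (rule Max_in)
  then show "\<exists>f. (\<forall>i<grp_rank G S. f i \<in> S) \<and> int_indep G (grp_rank G S) f" by simp
  show "\<And>m f. (\<forall>i<m. f i \<in> S) \<Longrightarrow> int_indep G m f \<Longrightarrow> m \<le> grp_rank G S"
    unfolding grp_rank_def using fin by (intro Max_ge) auto
qed

context comm_group
begin

lemma indep_to_nat:
  assumes "finite I" "x ` I \<subseteq> carrier G" "indep G x I"
  shows "\<exists>f. (\<forall>i<card I. f i \<in> x ` I) \<and> int_indep G (card I) f"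
proof -
  obtain h where h: "bij_betw h {0..<card I} I" using ex_bij_betw_nat_finite[OF assms(1)] by blast
  then have h': "bij_betw h {..<card I} I" by (simp add: atLeast0LessThan)
  have "indep G (x \<circ> h) {..<card I}" by (rule indep_reindex[OF h' assms(2,3)])
  then show ?thesis using h' by (intro exI[of _ "x \<circ> h"]) (auto simp: int_indep_iff bij_betw_apply)
qed

lemma rank_ge:
  assumes bdd: "\<And>m f. (\<forall>i<m. f i \<in> S) \<Longrightarrow> int_indep G m f \<Longrightarrow> m \<le> B"
    and "S \<subseteq> carrier G" "finite I" "x ` I \<subseteq> S" "indep G x I"
  shows "card I \<le> grp_rank G S"
proof -
  from indep_to_nat[OF assms(3) _ assms(5)] assms(2,4) obtain f where
    "\<forall>i<card I. f i \<in> x ` I" "int_indep G (card I) f" by blast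
  then show ?thesis using assms(4) by (intro rank_props(2)[OF bdd]) auto
qed

lemma fgen_bdd:
  assumes "fgen G w J" "S \<subseteq> carrier G"
  shows "\<And>m f. (\<forall>i<m. f i \<in> S) \<Longrightarrow> int_indep G m f \<Longrightarrow> m \<le> card J"
proof -
  fix m f assume "\<forall>i<m. f i \<in> S" "int_indep G m f"
  then show "m \<le> card J"
    using indep_card_le[of "{..<m}" J f w] assms unfolding fgen_def int_indep_iff by (auto; blast)
qed

lemma generate_lcomb:
  assumes "S \<subseteq> carrier G" "finite S" "x \<in> generate G S"
  shows "\<exists>c. x = lcomb G id c S"
  using assms(3)
proof (induction rule: generate.induct)
  case one
  then show ?case by (intro exI[of _ "\<lambda>_. 0"]) simp
next
  case (incl h)
  then have "h = lcomb G id (\<lambda>i. if i = h then 1 else 0) S" using assms lcomb_delta[of S h id] by auto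
  then show ?case by blast
next
  case (inv h)
  then have "inv h = inv (lcomb G id (\<lambda>i. if i = h then 1 else 0) S)"
    using assms lcomb_delta[of S h id] by auto
  also have "\<dots> = lcomb G id (\<lambda>i. - (if i = h then 1 else 0)) S"
    using assms by (simp add: lcomb_neg)
  finally show ?case by blast
next
  case (eng h1 h2)
  then obtain c1 c2 where "h1 = lcomb G id c1 S" "h2 = lcomb G id c2 S" by blast
  then have "h1 \<otimes> h2 = lcomb G id (\<lambda>i. c1 i + c2 i) S" using assms by (simp add: lcomb_add)
  then show ?case by blast
qed

lemma fin_gen_fgen:
  assumes "fin_gen G"
  shows "\<exists>J. fgen G id J"
proof -
  from assms obtain S where S: "finite S" "S \<subseteq> carrier G" "generate G S = carrier G"
    unfolding fin_gen_def by blast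
  then show ?thesis unfolding fgen_def using generate_lcomb[OF S(2,1)] by (intro exI[of _ S]) auto
qed

end




lemma Zr_smult_closed:
  fixes H :: "(nat \<Rightarrow> int) set"
  assumes "(\<lambda>_. 0) \<in> H" "\<And>u v. u\<in>H \<Longrightarrow> v\<in>H \<Longrightarrow> (\<lambda>j. u j + v j) \<in> H"
    "\<And>v. v\<in>H \<Longrightarrow> (\<lambda>j. - v j) \<in> H" "v \<in> H"
  shows "(\<lambda>j. k * v j) \<in> H"
proof -
  have nat: "(\<lambda>j. int n * v j) \<in> H" for n
  proof (induction n)
    case 0
    then show ?case using assms(1) by simp
  next
    case (Suc n)
    have "(\<lambda>j. int (Suc n) * v j) = (\<lambda>j. int n * v j + v j)" by (simp add: algebra_simps)
    then show ?case using assms(2)[OF Suc assms(4)] by simp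
  qed
  show ?thesis
  proof (cases "k \<ge> 0")
    case True
    then show ?thesis using nat[of "nat k"] by simp
  next
    case False
    have "(\<lambda>j. k * v j) = (\<lambda>j. - (int (nat (-k)) * v j))" using False by auto
    then show ?thesis using assms(3)[OF nat[of "nat (-k)"]] by simp
  qed
qed

lemma subgroup_Zr_basis:
  fixes H :: "(nat \<Rightarrow> int) set"
  assumes "\<And>v i. v \<in> H \<Longrightarrow> i \<ge> r \<Longrightarrow> v i = 0" "(\<lambda>_. 0) \<in> H"
    "\<And>u v. u\<in>H \<Longrightarrow> v\<in>H \<Longrightarrow> (\<lambda>j. u j + v j) \<in> H" "\<And>v. v\<in>H \<Longrightarrow> (\<lambda>j. - v j) \<in> H"
  shows "\<exists>B. finite B \<and> B \<subseteq> H \<and> (\<forall>c. (\<forall>j. (\<Sum>b\<in>B. c b * b j) = 0) \<longrightarrow> (\<forall>b\<in>B. c b = 0))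
           \<and> (\<forall>v\<in>H. \<exists>c. \<forall>j. v j = (\<Sum>b\<in>B. c b * b j))"
  using assms
proof (induction r arbitrary: H)
  case 0
  then have "v = (\<lambda>_. 0)" if "v \<in> H" for v using that by auto
  then show ?case by (intro exI[of _ "{}"]) auto
next
  case (Suc r)
  define H0 where "H0 = {v \<in> H. v r = 0}"
  have "\<exists>B. finite B \<and> B \<subseteq> H0 \<and> (\<forall>c. (\<forall>j. (\<Sum>b\<in>B. c b * b j) = 0) \<longrightarrow> (\<forall>b\<in>B. c b = 0))
           \<and> (\<forall>v\<in>H0. \<exists>c. \<forall>j. v j = (\<Sum>b\<in>B. c b * b j))"
  proof (rule Suc.IH)
    show "v i = 0" if "v \<in> H0" "r \<le> i" for v i
      using that Suc.prems(1)[of v i] by (cases "i = r") (auto simp: H0_def)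
  qed (use Suc.prems in \<open>auto simp: H0_def\<close>)
  then obtain B0 where B0: "finite B0" "B0 \<subseteq> H0" "\<forall>c. (\<forall>j. (\<Sum>b\<in>B0. c b * b j) = 0) \<longrightarrow> (\<forall>b\<in>B0. c b = 0)"
    "\<forall>v\<in>H0. \<exists>c. \<forall>j. v j = (\<Sum>b\<in>B0. c b * b j)" by blast
  show ?case
  proof (cases "\<forall>v\<in>H. v r = 0")
    case True
    then have "H0 = H" by (auto simp: H0_def)
    then show ?thesis using B0 by blast
  next
    case False
    have smult: "(\<lambda>j. k * v j) \<in> H" if "v \<in> H" for v k
      using Zr_smult_closed[of H v k] Suc.prems that by blast
    define S where "S = {n::nat. n > 0 \<and> (\<exists>v\<in>H. v r = int n)}"
    from False obtain v where v: "v \<in> H" "v r \<noteq> 0" by auto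
    have "nat \<bar>v r\<bar> \<in> S"
    proof (cases "v r > 0")
      case True
      then show ?thesis using v by (auto simp: S_def)
    next
      case False
      then show ?thesis using v Suc.prems(4)[OF v(1)] unfolding S_def
        by (intro CollectI conjI bexI[of _ "\<lambda>j. - v j"]) auto
    qed
    define d where "d = (LEAST n. n \<in> S)"
    have dS: "d \<in> S" unfolding d_def using \<open>nat \<bar>v r\<bar> \<in> S\<close> by (rule LeastI)
    then obtain h where h: "h \<in> H" "h r = int d" "d > 0" by (auto simp: S_def)
    have dvd: "v r = (v r div int d) * int d" if "v \<in> H" for v
    proof -
      define q where "q = v r div int d"
      define u where "u = (\<lambda>j. v j + (- q) * h j)"
      have uH: "u \<in> H" unfolding u_def using Suc.prems(3)[OF that smult[OF h(1), of "-q"]] by simp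
      have ur: "u r = v r mod int d" using h by (simp add: u_def q_def minus_div_mult_eq_mod [symmetric])
      have "v r mod int d = 0"
      proof (rule ccontr)
        assume ne: "v r mod int d \<noteq> 0"
        have "v r mod int d \<ge> 0" "v r mod int d < int d" using h by auto
        with ne have "nat (v r mod int d) \<in> S" using uH ur by (auto simp: S_def)
        moreover have "nat (v r mod int d) < d" using \<open>v r mod int d < int d\<close> \<open>v r mod int d \<ge> 0\<close> by (simp add: nat_less_iff)
        ultimately show False using not_less_Least[of "nat (v r mod int d)" "\<lambda>n. n \<in> S"] by (simp add: d_def)
      qed
      then show ?thesis by (metis add.right_neutral div_mult_mod_eq)
    qed
    have hB0: "h \<notin> B0" using B0(2) h by (auto simp: H0_def)
    have B0r: "b r = 0" if "b \<in> B0" for b using B0(2) that by (auto simp: H0_def)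
    show ?thesis
    proof (intro exI[of _ "insert h B0"] conjI allI impI ballI)
      show "finite (insert h B0)" using B0 by simp
      show "insert h B0 \<subseteq> H" using B0 h by (auto simp: H0_def)
    next
      fix c b assume c: "\<forall>j. (\<Sum>b\<in>insert h B0. c b * b j) = 0" and b: "b \<in> insert h B0"
      have "(\<Sum>b\<in>insert h B0. c b * b r) = c h * int d"
        using B0(1) hB0 h B0r by (simp add: sum.neutral)
      with c have ch: "c h = 0" using h by simp
      have "\<forall>j. (\<Sum>b\<in>B0. c b * b j) = 0"
        using c ch B0(1) hB0 by simp
      with B0(3) have "\<forall>b\<in>B0. c b = 0" by blast
      then show "c b = 0" using b ch by auto
    next
      fix v assume vH: "v \<in> H"
      define k where "k = v r div int d"
      define u where "u = (\<lambda>j. v j + (- k) * h j)"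
      have uH: "u \<in> H" unfolding u_def using Suc.prems(3)[OF vH smult[OF h(1), of "-k"]] by simp
      have "u r = 0" unfolding u_def k_def using dvd[OF vH] h by (simp add: algebra_simps)
      with uH obtain c' where c': "\<forall>j. u j = (\<Sum>b\<in>B0. c' b * b j)" using B0(4) by (auto simp: H0_def)
      show "\<exists>c. \<forall>j. v j = (\<Sum>b\<in>insert h B0. c b * b j)"
      proof (intro exI[of _ "c'(h := k)"] allI)
        fix j
        have "(\<Sum>b\<in>B0. (c'(h := k)) b * b j) = (\<Sum>b\<in>B0. c' b * b j)"
          using hB0 by (intro sum.cong) auto
        then show "v j = (\<Sum>b\<in>insert h B0. (c'(h := k)) b * b j)"
          using B0(1) hB0 c'[rule_format, of j] by (simp add: u_def)
      qed
    qed
  qed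
qed




context comm_group
begin

lemma torsion_pow_int:
  assumes "x \<in> carrier G" "x [^] (N::int) = \<one>" "N \<noteq> 0"
  shows "x \<in> torsion_subgroup G"
proof (cases "N > 0")
  case True
  then have "x [^] (nat N) = \<one>" using assms by (metis int_pow_int pos_int_cases nat_int)
  then show ?thesis using assms True unfolding torsion_subgroup_def by (intro CollectI conjI exI[of _ "nat N"]) auto
next
  case False
  have "N = - int (nat (-N))" using False by simp
  then have "inv (x [^] (nat (-N))) = \<one>" using assms by (metis int_pow_neg_int)
  then have "x [^] (nat (-N)) = \<one>" using assms by (metis inv_inv inv_one nat_pow_closed)
  then show ?thesis using assms False unfolding torsion_subgroup_def by (intro CollectI conjI exI[of _ "nat (-N)"]) auto
qed

theorem decomp:
  assumes "fgen G w J"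
  shows "\<exists>B :: (nat \<Rightarrow> int) set. \<exists>\<beta>. finite B \<and> \<beta> ` B \<subseteq> carrier G \<and> indep G \<beta> B
           \<and> card B = grp_rank G (carrier G)
           \<and> (\<forall>x\<in>carrier G. \<exists>t\<in>torsion_subgroup G. \<exists>c. x = t \<otimes> lcomb G \<beta> c B)"
proof -
  have bdd: "\<And>m f. (\<forall>i<m. f i \<in> carrier G) \<Longrightarrow> int_indep G m f \<Longrightarrow> m \<le> card J"
    by (rule fgen_bdd[OF assms subset_refl])
  define r where "r = grp_rank G (carrier G)"
  define E where "E = {..<r}"
  have "\<exists>f. (\<forall>i<grp_rank G (carrier G). f i \<in> carrier G) \<and> int_indep G (grp_rank G (carrier G)) f"
    by (rule rank_props(1)) (rule bdd)
  then obtain e where e: "\<forall>i<r. e i \<in> carrier G" "int_indep G r e"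
    unfolding r_def by blast
  have eE: "e ` E \<subseteq> carrier G" using e by (auto simp: E_def)
  have rk2: "m \<le> r" if "\<forall>i<m. f i \<in> carrier G" "int_indep G m f" for m f
    unfolding r_def by (rule rank_props(2)[OF _ that]) (rule bdd)
  have indE: "indep G e E" using e by (simp add: int_indep_iff E_def)
  have fJ: "finite J" and wJ: "w ` J \<subseteq> carrier G" and gen: "\<forall>x\<in>carrier G. \<exists>c. x = lcomb G w c J"
    using assms by (auto simp: fgen_def)
  have maxi: "\<exists>m c. m \<noteq> 0 \<and> x [^] (m::int) = lcomb G e c E" if x: "x \<in> carrier G" for x
  proof -
    define e' where "e' = e(r := x)"
    have "\<not> int_indep G (Suc r) e'"
    proof
      assume "int_indep G (Suc r) e'"
      moreover have "\<forall>i<Suc r. e' i \<in> carrier G" using e x by (auto simp: e'_def less_Suc_eq)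
      ultimately have "Suc r \<le> r" by (rule rk2[rotated])
      then show False by simp
    qed
    then obtain c where c: "lcomb G e' c {..<Suc r} = \<one>" "\<exists>i\<in>{..<Suc r}. c i \<noteq> 0"
      unfolding int_indep_iff indep_def by blast
    have e'E: "e' ` insert r E \<subseteq> carrier G" using e x by (auto simp: e'_def E_def)
    have "lcomb G e' c {..<Suc r} = x [^] c r \<otimes> lcomb G e' c E"
      using e'E by (simp add: lessThan_Suc E_def lcomb_insert e'_def)
    also have "lcomb G e' c E = lcomb G e c E"
      using eE by (intro lcomb_cong2) (auto simp: e'_def E_def)
    finally have eq: "x [^] c r \<otimes> lcomb G e c E = \<one>" using c by simp
    have cr: "c r \<noteq> 0"
    proof
      assume "c r = 0"
      then have "lcomb G e c E = \<one>" using eq eE by simp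
      then have "\<forall>i\<in>E. c i = 0" using indE unfolding indep_def by blast
      with c(2) \<open>c r = 0\<close> show False by (auto simp: E_def less_Suc_eq)
    qed
    have "x [^] c r = inv (lcomb G e c E)"
      using eq eE x by (metis inv_equality inv_inv lcomb_closed int_pow_closed inv_closed)
    also have "\<dots> = lcomb G e (\<lambda>i. - c i) E" using eE by (simp add: lcomb_neg)
    finally show ?thesis using cr by blast
  qed
  define m where "m j = (SOME m. m \<noteq> 0 \<and> (\<exists>c. w j [^] (m::int) = lcomb G e c E))" for j
  have m: "m j \<noteq> 0 \<and> (\<exists>c. w j [^] m j = lcomb G e c E)" if "j \<in> J" for j
    using someI_ex[OF maxi[of "w j"]] that wJ unfolding m_def by auto
  define N where "N = (\<Prod>j\<in>J. m j)"
  have N0: "N \<noteq> 0" using m fJ by (simp add: N_def)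
  have wN: "\<exists>c. w j [^] N = lcomb G e c E" if j: "j \<in> J" for j
  proof -
    obtain c where c: "w j [^] m j = lcomb G e c E" using m[OF j] by blast
    have "m j dvd N" unfolding N_def using fJ j by (rule dvd_prodI)
    then obtain q where q: "N = m j * q" by blast
    have wj: "w j \<in> carrier G" using wJ j by auto
    have "w j [^] N = (w j [^] m j) [^] q" using wj by (simp add: int_pow_pow q)
    also have "\<dots> = lcomb G e (\<lambda>i. q * c i) E" using c eE by (simp add: lcomb_pow)
    finally show ?thesis by blast
  qed
  define Cw where "Cw j = (SOME c. w j [^] N = lcomb G e c E)" for j
  have Cw: "w j [^] N = lcomb G e (Cw j) E" if "j \<in> J" for j
    using someI_ex[OF wN[OF that]] by (simp add: Cw_def)
  have P: "\<exists>v. x [^] N = lcomb G e v E \<and> (\<forall>i. i \<notin> E \<longrightarrow> v i = 0)" if x: "x \<in> carrier G" for x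
  proof -
    obtain c where c: "x = lcomb G w c J" using gen x by blast
    have "x [^] N = lcomb G w (\<lambda>j. N * c j) J" using c wJ by (simp add: lcomb_pow)
    also have "\<dots> = lcomb G (\<lambda>j. w j [^] N) c J"
      using wJ by (intro lcomb_cong2) (auto simp: int_pow_pow ac_simps)
    also have "\<dots> = lcomb G e (\<lambda>i. \<Sum>j\<in>J. c j * Cw j i) E"
      using fJ wJ eE Cw by (intro lcomb_comp) auto
    also have "\<dots> = lcomb G e (\<lambda>i. if i \<in> E then \<Sum>j\<in>J. c j * Cw j i else 0) E"
      using eE by (intro lcomb_cong) auto
    finally show ?thesis by auto
  qed
  have uniq: "v = v'" if "lcomb G e v E = lcomb G e v' E" "\<forall>i. i \<notin> E \<longrightarrow> v i = 0"
    "\<forall>i. i \<notin> E \<longrightarrow> v' i = 0" for v v'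
  proof -
    have "lcomb G e (\<lambda>i. v i - v' i) E = \<one>" using that eE by (simp add: lcomb_diff)
    then have "\<forall>i\<in>E. v i - v' i = 0" using indE unfolding indep_def by blast
    then show ?thesis using that by (intro ext) (metis eq_iff_diff_eq_0)
  qed
  define \<theta> where "\<theta> x = (SOME v. x [^] N = lcomb G e v E \<and> (\<forall>i. i \<notin> E \<longrightarrow> v i = 0))" for x
  have \<theta>: "x [^] N = lcomb G e (\<theta> x) E \<and> (\<forall>i. i \<notin> E \<longrightarrow> \<theta> x i = 0)" if "x \<in> carrier G" for x
    using someI_ex[OF P[OF that]] by (simp add: \<theta>_def)
  have \<theta>_char: "\<theta> x = v" if "x \<in> carrier G" "x [^] N = lcomb G e v E" "\<forall>i. i \<notin> E \<longrightarrow> v i = 0" for x v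
    using \<theta>[OF that(1)] that by (intro uniq) auto
  have \<theta>_mult: "\<theta> (x \<otimes> y) = (\<lambda>i. \<theta> x i + \<theta> y i)" if "x \<in> carrier G" "y \<in> carrier G" for x y
  proof (rule \<theta>_char)
    have "(x \<otimes> y) [^] N = x [^] N \<otimes> y [^] N" using that by (simp add: int_pow_distrib)
    also have "\<dots> = lcomb G e (\<lambda>i. \<theta> x i + \<theta> y i) E" using \<theta> that eE by (simp add: lcomb_add)
    finally show "(x \<otimes> y) [^] N = lcomb G e (\<lambda>i. \<theta> x i + \<theta> y i) E" .
  qed (use that \<theta> in auto)
  have \<theta>_inv: "\<theta> (inv x) = (\<lambda>i. - \<theta> x i)" if "x \<in> carrier G" for x
  proof (rule \<theta>_char)
    have "(inv x) [^] N = inv (x [^] N)" using that by (simp add: int_pow_inv)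
    also have "\<dots> = lcomb G e (\<lambda>i. - \<theta> x i) E" using \<theta> that eE by (simp add: lcomb_neg)
    finally show "(inv x) [^] N = lcomb G e (\<lambda>i. - \<theta> x i) E" .
  qed (use that \<theta> in auto)
  have \<theta>_one: "\<theta> \<one> = (\<lambda>_. 0)" by (rule \<theta>_char) auto
  have \<theta>_lcomb: "\<theta> (lcomb G \<beta> c B) = (\<lambda>i. \<Sum>b\<in>B. c b * \<theta> (\<beta> b) i)"
    if "finite B" "\<beta> ` B \<subseteq> carrier G" for B :: "(nat \<Rightarrow> int) set" and \<beta> c
  proof (rule \<theta>_char)
    have "(lcomb G \<beta> c B) [^] N = lcomb G \<beta> (\<lambda>b. N * c b) B" using that by (simp add: lcomb_pow)
    also have "\<dots> = lcomb G (\<lambda>b. \<beta> b [^] N) c B"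
      using that by (intro lcomb_cong2) (auto simp: int_pow_pow ac_simps)
    also have "\<dots> = lcomb G e (\<lambda>i. \<Sum>b\<in>B. c b * \<theta> (\<beta> b) i) E"
      using that eE \<theta> by (intro lcomb_comp) auto
    finally show "(lcomb G \<beta> c B) [^] N = lcomb G e (\<lambda>i. \<Sum>b\<in>B. c b * \<theta> (\<beta> b) i) E" .
    show "\<forall>i. i \<notin> E \<longrightarrow> (\<Sum>b\<in>B. c b * \<theta> (\<beta> b) i) = 0"
    proof (intro allI impI sum.neutral ballI)
      fix i b assume "i \<notin> E" "b \<in> B"
      then show "c b * \<theta> (\<beta> b) i = 0" using that(2) \<theta>[of "\<beta> b"] by auto
    qed
  qed (use that in auto)
  define H where "H = \<theta> ` carrier G"
  have "\<exists>B. finite B \<and> B \<subseteq> H \<and> (\<forall>c. (\<forall>j. (\<Sum>b\<in>B. c b * b j) = 0) \<longrightarrow> (\<forall>b\<in>B. c b = 0))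
           \<and> (\<forall>v\<in>H. \<exists>c. \<forall>j. v j = (\<Sum>b\<in>B. c b * b j))"
  proof (rule subgroup_Zr_basis[where r = r])
    show "v i = 0" if "v \<in> H" "r \<le> i" for v i
    proof -
      from that(1) obtain x where x: "x \<in> carrier G" and v: "v = \<theta> x" unfolding H_def by (rule imageE)
      have "i \<notin> E" using that(2) by (simp add: E_def)
      then show ?thesis using \<theta>[OF x] v by simp
    qed
    show "(\<lambda>_. 0) \<in> H" unfolding H_def by (rule image_eqI[where x = "\<one>"]) (simp_all add: \<theta>_one)
    show "(\<lambda>j. u j + v j) \<in> H" if "u \<in> H" "v \<in> H" for u v
    proof -
      from that(1) obtain x where "x \<in> carrier G" "u = \<theta> x" unfolding H_def by (rule imageE)
      moreover from that(2) obtain y where "y \<in> carrier G" "v = \<theta> y" unfolding H_def by (rule imageE)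
      ultimately have "(\<lambda>j. u j + v j) = \<theta> (x \<otimes> y)" "x \<otimes> y \<in> carrier G" by (simp_all add: \<theta>_mult)
      then show ?thesis unfolding H_def by (rule image_eqI)
    qed
    show "(\<lambda>j. - v j) \<in> H" if "v \<in> H" for v
    proof -
      from that obtain x where "x \<in> carrier G" "v = \<theta> x" unfolding H_def by (rule imageE)
      then have "(\<lambda>j. - v j) = \<theta> (inv x)" "inv x \<in> carrier G" by (simp_all add: \<theta>_inv)
      then show ?thesis unfolding H_def by (rule image_eqI)
    qed
  qed
  then obtain B where B: "finite B" "B \<subseteq> H" "\<forall>c. (\<forall>j. (\<Sum>b\<in>B. c b * b j) = 0) \<longrightarrow> (\<forall>b\<in>B. c b = 0)"
    "\<forall>v\<in>H. \<exists>c. \<forall>j. v j = (\<Sum>b\<in>B. c b * b j)" by (elim exE conjE) (rule that)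
  define \<beta> where "\<beta> b = (SOME x. x \<in> carrier G \<and> \<theta> x = b)" for b
  have \<beta>: "\<beta> b \<in> carrier G \<and> \<theta> (\<beta> b) = b" if "b \<in> B" for b
  proof -
    have "b \<in> \<theta> ` carrier G" using that B(2) unfolding H_def by blast
    then obtain x where "x \<in> carrier G" "b = \<theta> x" by (rule imageE)
    then have "x \<in> carrier G \<and> \<theta> x = b" by simp
    then show ?thesis unfolding \<beta>_def by (rule someI)
  qed
  have \<beta>B: "\<beta> ` B \<subseteq> carrier G" using \<beta> by blast
  have \<theta>\<beta>: "\<theta> (lcomb G \<beta> c B) = (\<lambda>i. \<Sum>b\<in>B. c b * b i)" for c
    unfolding \<theta>_lcomb[OF B(1) \<beta>B, of c] using \<beta> by (intro ext sum.cong refl) simp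
  have ind\<beta>: "indep G \<beta> B" unfolding indep_def
  proof (intro allI impI)
    fix c assume "lcomb G \<beta> c B = \<one>"
    then have "(\<lambda>i. \<Sum>b\<in>B. c b * b i) = (\<lambda>_. 0)" using \<theta>\<beta>[of c] \<theta>_one by simp
    then have "\<forall>j. (\<Sum>b\<in>B. c b * b j) = 0" by (simp add: fun_eq_iff)
    then show "\<forall>b\<in>B. c b = 0" using B(3) by blast
  qed
  have ker: "x \<in> torsion_subgroup G" if "x \<in> carrier G" "\<theta> x = (\<lambda>_. 0)" for x
  proof -
    have "x [^] N = \<one>" using \<theta>[OF that(1)] that(2) by simp
    then show ?thesis using torsion_pow_int that N0 by blast
  qed
  have dec: "\<exists>t\<in>torsion_subgroup G. \<exists>c. x = t \<otimes> lcomb G \<beta> c B" if x: "x \<in> carrier G" for x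
  proof -
    have "\<theta> x \<in> H" using x by (simp add: H_def)
    then obtain c where c: "\<forall>j. \<theta> x j = (\<Sum>b\<in>B. c b * b j)" using B(4) by blast
    define L where "L = lcomb G \<beta> c B"
    have L: "L \<in> carrier G" using \<beta>B by (simp add: L_def)
    define t where "t = x \<otimes> inv L"
    have t: "t \<in> carrier G" using x L by (simp add: t_def)
    have "\<theta> t = (\<lambda>i. \<theta> x i + - \<theta> L i)" using x L by (simp add: t_def \<theta>_mult \<theta>_inv)
    also have "\<dots> = (\<lambda>_. 0)" using c \<theta>\<beta>[of c] by (simp add: L_def)
    finally have "t \<in> torsion_subgroup G" using ker t by blast
    moreover have "x = t \<otimes> L" using x L by (simp add: t_def m_assoc)
    ultimately show ?thesis unfolding L_def by blast
  qed
  have le1: "card B \<le> r" unfolding r_def by (rule rank_ge[OF _ subset_refl B(1) \<beta>B ind\<beta>]) (rule bdd)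
  have le2: "r \<le> card B"
  proof -
    have "card E \<le> card B"
    proof (rule indep_card_le'[OF _ B(1) eE \<beta>B indE])
      show "finite E" by (simp add: E_def)
      fix i assume i: "i \<in> E"
      then have ei: "e i \<in> carrier G" using eE by auto
      obtain t c where tc: "t \<in> torsion_subgroup G" "e i = t \<otimes> lcomb G \<beta> c B" using dec[OF ei] by blast
      then obtain n :: nat where n: "n > 0" "t [^] n = \<one>" "t \<in> carrier G"
        unfolding torsion_subgroup_def by blast
      have "e i [^] (int n) = t [^] (int n) \<otimes> (lcomb G \<beta> c B) [^] (int n)"
        using tc n \<beta>B by (simp add: int_pow_distrib)
      also have "\<dots> = (lcomb G \<beta> c B) [^] (int n)" using n \<beta>B by (simp add: int_pow_int)
      also have "\<dots> = lcomb G \<beta> (\<lambda>b. int n * c b) B" using \<beta>B by (rule lcomb_pow)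
      finally show "\<exists>n c. n \<noteq> 0 \<and> e i [^] (n::int) = lcomb G \<beta> c B" using n by (intro exI conjI) auto
    qed
    then show ?thesis by (simp add: E_def)
  qed
  have "card B = grp_rank G (carrier G)" using le1 le2 unfolding r_def by simp
  with B(1) \<beta>B ind\<beta> dec show ?thesis by blast
qed

end




context comm_group
begin

lemma tor_sub: "torsion_subgroup G \<subseteq> carrier G"
  unfolding torsion_subgroup_def by auto

lemma tor_one: "\<one> \<in> torsion_subgroup G"
  unfolding torsion_subgroup_def by (auto intro!: exI[of _ "1::nat"])

lemma tor_mult:
  assumes "x \<in> torsion_subgroup G" "y \<in> torsion_subgroup G"
  shows "x \<otimes> y \<in> torsion_subgroup G"
proof -
  obtain m :: nat where m: "m > 0" "x [^] m = \<one>" "x \<in> carrier G" using assms(1) unfolding torsion_subgroup_def by blast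
  obtain n :: nat where n: "n > 0" "y [^] n = \<one>" "y \<in> carrier G" using assms(2) unfolding torsion_subgroup_def by blast
  have "(x \<otimes> y) [^] (m * n) = x [^] (m * n) \<otimes> y [^] (m * n)" using m n by (simp add: pow_mult_distrib m_comm)
  also have "x [^] (m * n) = \<one>" using m by (simp add: nat_pow_pow[symmetric])
  also have "y [^] (m * n) = \<one>" using n by (simp add: nat_pow_pow[symmetric] mult.commute[of m n])
  finally have "(x \<otimes> y) [^] (m * n) = \<one>" by simp
  then show ?thesis using m n unfolding torsion_subgroup_def by (intro CollectI conjI exI[of _ "m * n"]) auto
qed

lemma tor_inv:
  assumes "x \<in> torsion_subgroup G"
  shows "inv x \<in> torsion_subgroup G"
proof -
  obtain m :: nat where m: "m > 0" "x [^] m = \<one>" "x \<in> carrier G" using assms(1) unfolding torsion_subgroup_def by blast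
  have "(inv x) [^] m = \<one>" using m by (simp add: nat_pow_inv)
  then show ?thesis using m unfolding torsion_subgroup_def by (intro CollectI conjI exI[of _ m]) auto
qed

lemma dec_uniq:
  assumes B: "finite B" "\<beta> ` B \<subseteq> carrier G" "indep G \<beta> B"
    and t: "t \<in> torsion_subgroup G" "t' \<in> torsion_subgroup G"
    and eq: "t \<otimes> lcomb G \<beta> c B = t' \<otimes> lcomb G \<beta> c' B"
  shows "t = t' \<and> (\<forall>b\<in>B. c b = c' b)"
proof -
  have tc: "t \<in> carrier G" "t' \<in> carrier G" using t tor_sub by auto
  define D where "D = lcomb G \<beta> (\<lambda>b. c b - c' b) B"
  have L: "lcomb G \<beta> c B \<in> carrier G" "lcomb G \<beta> c' B \<in> carrier G" using B by auto
  have D: "D = lcomb G \<beta> c B \<otimes> inv (lcomb G \<beta> c' B)" unfolding D_def using B by (simp add: lcomb_diff)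
  have "D = inv t \<otimes> t'"
  proof -
    have "inv t \<otimes> (t \<otimes> lcomb G \<beta> c B) \<otimes> inv (lcomb G \<beta> c' B) = inv t \<otimes> (t' \<otimes> lcomb G \<beta> c' B) \<otimes> inv (lcomb G \<beta> c' B)"
      using eq by simp
    then show ?thesis using tc L D by (simp add: m_assoc[symmetric] l_inv) (simp add: m_assoc)
  qed
  then have "D \<in> torsion_subgroup G" using t tor_mult tor_inv by simp
  then obtain n :: nat where n: "n > 0" "D [^] n = \<one>" unfolding torsion_subgroup_def by blast
  have "D [^] (int n) = lcomb G \<beta> (\<lambda>b. int n * (c b - c' b)) B"
    unfolding D_def by (rule lcomb_pow[OF B(2)])
  with n have "lcomb G \<beta> (\<lambda>b. int n * (c b - c' b)) B = \<one>" by (simp add: int_pow_int)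
  then have "\<forall>b\<in>B. int n * (c b - c' b) = 0" using B(3) unfolding indep_def by blast
  then have cc: "\<forall>b\<in>B. c b = c' b" using n by simp
  then have "lcomb G \<beta> c B = lcomb G \<beta> c' B" using B by (intro lcomb_cong) auto
  then have "t = t'" using eq tc L by simp
  with cc show ?thesis by simp
qed

end




lemma hom_restrict_carrier:
  "h \<in> hom (G\<lparr>carrier := T\<rparr>) K \<longleftrightarrow> h \<in> T \<rightarrow> carrier K \<and> (\<forall>x\<in>T. \<forall>y\<in>T. h (x \<otimes>\<^bsub>G\<^esub> y) = h x \<otimes>\<^bsub>K\<^esub> h y)"
  unfolding hom_def by simp

context comm_group
begin

theorem count_hom:
  fixes K :: "('k, 'e) monoid_scheme"
  assumes "fgen G w J" "comm_group K"
  shows "card (Hom G K) = card (Hom (G\<lparr>carrier := torsion_subgroup G\<rparr>) K) * card (carrier K) ^ grp_rank G (carrier G)"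
proof -
  interpret K: comm_group K by fact
  obtain B :: "(nat \<Rightarrow> int) set" and \<beta> where B: "finite B" "\<beta> ` B \<subseteq> carrier G" "indep G \<beta> B"
    "card B = grp_rank G (carrier G)" and dec: "\<forall>x\<in>carrier G. \<exists>t\<in>torsion_subgroup G. \<exists>c. x = t \<otimes> lcomb G \<beta> c B"
    using decomp[OF assms(1)] by blast
  define T where "T = torsion_subgroup G"
  define P where "P = (\<Pi>\<^sub>E b\<in>B. carrier K)"
  define \<Phi> where "\<Phi> \<phi> = (restrict \<phi> T, restrict (\<lambda>b. \<phi> (\<beta> b)) B)" for \<phi> :: "'a \<Rightarrow> 'k"
  have TG: "T \<subseteq> carrier G" by (simp add: T_def tor_sub)
  have hom_lcomb: "\<phi> (lcomb G \<beta> c B) = lcomb K (\<lambda>b. \<phi> (\<beta> b)) c B" if "\<phi> \<in> hom G K" for \<phi> c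
    using lcomb_hom[OF assms(2) that B(2)] .
  have "bij_betw \<Phi> (Hom G K) (Hom (G\<lparr>carrier := T\<rparr>) K \<times> P)"
  proof (rule bij_betwI')
    fix \<phi>1 \<phi>2 assume \<phi>: "\<phi>1 \<in> Hom G K" "\<phi>2 \<in> Hom G K"
    show "(\<Phi> \<phi>1 = \<Phi> \<phi>2) = (\<phi>1 = \<phi>2)"
    proof
      assume eq: "\<Phi> \<phi>1 = \<Phi> \<phi>2"
      then have eqT: "\<phi>1 t = \<phi>2 t" if "t \<in> T" for t
        using that unfolding \<Phi>_def by (metis prod.inject restrict_apply')
      have eqB: "\<phi>1 (\<beta> b) = \<phi>2 (\<beta> b)" if "b \<in> B" for b
        using eq that unfolding \<Phi>_def by (metis prod.inject restrict_apply')
      show "\<phi>1 = \<phi>2"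
      proof (rule extensionalityI[of _ "carrier G"])
        show "\<phi>1 \<in> extensional (carrier G)" "\<phi>2 \<in> extensional (carrier G)" using \<phi> by (auto simp: Hom_def)
        fix x assume x: "x \<in> carrier G"
        then obtain t c where tc: "t \<in> T" "x = t \<otimes> lcomb G \<beta> c B" using dec unfolding T_def by blast
        have t: "t \<in> carrier G" using tc TG by auto
        have L: "lcomb G \<beta> c B \<in> carrier G" using B by auto
        have h: "\<phi>1 \<in> hom G K" "\<phi>2 \<in> hom G K" using \<phi> by (auto simp: Hom_def)
        have "\<phi>1 x = \<phi>1 t \<otimes>\<^bsub>K\<^esub> lcomb K (\<lambda>b. \<phi>1 (\<beta> b)) c B"
          using tc t L h by (simp add: hom_mult hom_lcomb)
        also have "\<dots> = \<phi>2 t \<otimes>\<^bsub>K\<^esub> lcomb K (\<lambda>b. \<phi>2 (\<beta> b)) c B"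
          using eqT[OF tc(1)] eqB B(2) h by (subst K.lcomb_cong2[of B "\<lambda>b. \<phi>2 (\<beta> b)" _ "\<lambda>b. \<phi>1 (\<beta> b)" c]) (auto simp: hom_def)
        also have "\<dots> = \<phi>2 x"
          using tc t L h by (simp add: hom_mult hom_lcomb)
        finally show "\<phi>1 x = \<phi>2 x" .
      qed
    qed simp
  next
    fix \<phi> assume \<phi>: "\<phi> \<in> Hom G K"
    then have h: "\<phi> \<in> hom G K" by (simp add: Hom_def)
    have "restrict \<phi> T \<in> Hom (G\<lparr>carrier := T\<rparr>) K"
      unfolding Hom_def hom_restrict_carrier using h TG tor_mult
      by (auto simp: hom_def T_def; blast)
    moreover have "restrict (\<lambda>b. \<phi> (\<beta> b)) B \<in> P"
      unfolding P_def using h B(2) by (auto simp: hom_def)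
    ultimately show "\<Phi> \<phi> \<in> Hom (G\<lparr>carrier := T\<rparr>) K \<times> P" by (simp add: \<Phi>_def)
  next
    fix p assume p: "p \<in> Hom (G\<lparr>carrier := T\<rparr>) K \<times> P"
    obtain \<psi> g where pg: "p = (\<psi>, g)" by (cases p)
    have \<psi>h: "\<psi> \<in> hom (G\<lparr>carrier := T\<rparr>) K" "\<psi> \<in> extensional T"
      using p pg unfolding Hom_def by auto
    have \<psi>: "\<psi> \<in> T \<rightarrow> carrier K" "\<And>x y. x \<in> T \<Longrightarrow> y \<in> T \<Longrightarrow> \<psi> (x \<otimes> y) = \<psi> x \<otimes>\<^bsub>K\<^esub> \<psi> y"
      "\<psi> \<in> extensional T"
      using \<psi>h unfolding hom_restrict_carrier by auto
    have g: "g ` B \<subseteq> carrier K" "g \<in> extensional B" using p pg by (auto simp: P_def PiE_def)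
    have \<psi>1: "\<psi> \<one> = \<one>\<^bsub>K\<^esub>"
    proof -
      have "\<psi> \<one> = \<psi> \<one> \<otimes>\<^bsub>K\<^esub> \<psi> \<one>" using \<psi>(2)[of \<one> \<one>] tor_one by (simp add: T_def)
      moreover have "\<psi> \<one> \<in> carrier K" using \<psi>(1) tor_one by (auto simp: T_def)
      ultimately show ?thesis by (metis K.l_cancel_one' K.one_closed K.r_one)
    qed
    define D where "D x = (SOME q. fst q \<in> T \<and> x = fst q \<otimes> lcomb G \<beta> (snd q) B)" for x
    have D: "fst (D x) \<in> T \<and> x = fst (D x) \<otimes> lcomb G \<beta> (snd (D x)) B" if "x \<in> carrier G" for x
    proof -
      from dec that obtain t c where "t \<in> T" "x = t \<otimes> lcomb G \<beta> c B" unfolding T_def by blast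
      then have "fst (t, c) \<in> T \<and> x = fst (t, c) \<otimes> lcomb G \<beta> (snd (t, c)) B" by simp
      then show ?thesis unfolding D_def by (rule someI)
    qed
    define \<phi> where "\<phi> x = (if x \<in> carrier G then \<psi> (fst (D x)) \<otimes>\<^bsub>K\<^esub> lcomb K g (snd (D x)) B else undefined)" for x
    have \<phi>_eq: "\<phi> x = \<psi> t \<otimes>\<^bsub>K\<^esub> lcomb K g c B" if "t \<in> T" "x = t \<otimes> lcomb G \<beta> c B" for x t c
    proof -
      have x: "x \<in> carrier G" using that TG B(2) by auto
      have "fst (D x) = t \<and> (\<forall>b\<in>B. snd (D x) b = c b)"
        using dec_uniq[OF B(1,2,3), of "fst (D x)" t "snd (D x)" c] D[OF x] that by (simp add: T_def)
      then have "lcomb K g (snd (D x)) B = lcomb K g c B" using g by (intro K.lcomb_cong) auto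
      then show ?thesis using x \<open>fst (D x) = t \<and> _\<close> by (simp add: \<phi>_def)
    qed
    have \<phi>_closed: "\<phi> x \<in> carrier K" if "x \<in> carrier G" for x
      using that D[OF that] \<psi>(1) g by (auto simp: \<phi>_def)
    have \<phi>_hom: "\<phi> \<in> hom G K"
    proof (rule homI)
      show "\<phi> x \<in> carrier K" if "x \<in> carrier G" for x using \<phi>_closed that .
      fix x y assume xy: "x \<in> carrier G" "y \<in> carrier G"
      obtain t c where tc: "t \<in> T" "x = t \<otimes> lcomb G \<beta> c B" using dec xy unfolding T_def by blast
      obtain s d where sd: "s \<in> T" "y = s \<otimes> lcomb G \<beta> d B" using dec xy unfolding T_def by blast
      have ts: "t \<in> carrier G" "s \<in> carrier G" using tc sd TG by auto
      have L: "lcomb G \<beta> c B \<in> carrier G" "lcomb G \<beta> d B \<in> carrier G" using B by auto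
      have LK: "lcomb K g c B \<in> carrier K" "lcomb K g d B \<in> carrier K" using g by auto
      have \<psi>ts: "\<psi> t \<in> carrier K" "\<psi> s \<in> carrier K" using \<psi>(1) tc sd by auto
      have "x \<otimes> y = (t \<otimes> s) \<otimes> lcomb G \<beta> (\<lambda>b. c b + d b) B"
        using tc sd ts L B(2) by (simp add: lcomb_add m_ac)
      then have "\<phi> (x \<otimes> y) = \<psi> (t \<otimes> s) \<otimes>\<^bsub>K\<^esub> lcomb K g (\<lambda>b. c b + d b) B"
        using tc sd by (intro \<phi>_eq) (auto simp: T_def tor_mult)
      also have "\<dots> = (\<psi> t \<otimes>\<^bsub>K\<^esub> lcomb K g c B) \<otimes>\<^bsub>K\<^esub> (\<psi> s \<otimes>\<^bsub>K\<^esub> lcomb K g d B)"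
        using \<psi>(2)[OF tc(1) sd(1)] g LK \<psi>ts by (simp add: K.lcomb_add K.m_ac)
      also have "\<dots> = \<phi> x \<otimes>\<^bsub>K\<^esub> \<phi> y" using \<phi>_eq tc sd by simp
      finally show "\<phi> (x \<otimes> y) = \<phi> x \<otimes>\<^bsub>K\<^esub> \<phi> y" .
    qed
    have \<phi>_ext: "\<phi> \<in> extensional (carrier G)" by (simp add: \<phi>_def extensional_def)
    have r1: "restrict \<phi> T = \<psi>"
    proof (rule extensionalityI[of _ T])
      show "restrict \<phi> T \<in> extensional T" by simp
      show "\<psi> \<in> extensional T" by (rule \<psi>(3))
      fix t assume t: "t \<in> T"
      have "t = t \<otimes> lcomb G \<beta> (\<lambda>_. 0) B" using t TG by auto
      then have "\<phi> t = \<psi> t \<otimes>\<^bsub>K\<^esub> lcomb K g (\<lambda>_. 0) B" by (rule \<phi>_eq[OF t])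
      moreover have "\<psi> t \<in> carrier K" using t \<psi>(1) by blast
      ultimately show "restrict \<phi> T t = \<psi> t" using t by simp
    qed
    have r2: "restrict (\<lambda>b. \<phi> (\<beta> b)) B = g"
    proof (rule extensionalityI[of _ B])
      show "restrict (\<lambda>b. \<phi> (\<beta> b)) B \<in> extensional B" by simp
      show "g \<in> extensional B" by (rule g(2))
      fix b assume b: "b \<in> B"
      have "\<beta> b = \<one> \<otimes> lcomb G \<beta> (\<lambda>i. if i = b then 1 else 0) B"
        using b B lcomb_delta[of B b \<beta>] by auto
      then have "\<phi> (\<beta> b) = \<psi> \<one> \<otimes>\<^bsub>K\<^esub> lcomb K g (\<lambda>i. if i = b then 1 else 0) B"
        using tor_one by (intro \<phi>_eq) (auto simp: T_def)
      also have "\<dots> = g b" using \<psi>1 K.lcomb_delta[of B b g] b B g by auto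
      finally show "restrict (\<lambda>b. \<phi> (\<beta> b)) B b = g b" using b by simp
    qed
    show "\<exists>\<phi>\<in>Hom G K. p = \<Phi> \<phi>"
      using \<phi>_hom \<phi>_ext r1 r2 pg by (intro bexI[of _ \<phi>]) (auto simp: \<Phi>_def Hom_def)
  qed
  then have "card (Hom G K) = card (Hom (G\<lparr>carrier := T\<rparr>) K \<times> P)" by (rule bij_betw_same_card)
  also have "\<dots> = card (Hom (G\<lparr>carrier := T\<rparr>) K) * card P" by (rule card_cartesian_product)
  also have "card P = card (carrier K) ^ card B" unfolding P_def using B(1) by (simp add: card_PiE)
  finally show ?thesis using B(4) by (simp add: T_def)
qed

end




context comm_group
begin

lemma lcomb_subgroup:
  assumes "subgroup H G" "x ` I \<subseteq> H"
  shows "lcomb G x c I \<in> H"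
proof (cases "finite I")
  case True
  then show ?thesis using assms(2)
  proof (induction I rule: finite_induct)
    case empty
    then show ?case using assms(1) by (simp add: subgroup.one_closed)
  next
    case (insert i I)
    have sub: "H \<subseteq> carrier G" using assms(1) by (rule subgroup.subset)
    have "lcomb G x c (insert i I) = x i [^] c i \<otimes> lcomb G x c I"
      using insert sub by (intro lcomb_insert) auto
    moreover have "x i [^] c i \<in> H" using insert assms(1) by (intro subgroup_int_pow_closed) auto
    ultimately show ?case using insert assms(1) by (simp add: subgroup.m_closed)
  qed
next
  case False
  then show ?thesis using assms(1) by (simp add: lcomb_def subgroup.one_closed)
qed

lemma quot_comm_group: "subgroup H G \<Longrightarrow> comm_group (G Mod H)"
  by (rule abelian_FactGroup)

lemma quot_hom: "subgroup H G \<Longrightarrow> (\<lambda>a. H #> a) \<in> hom G (G Mod H)"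
  using normal.r_coset_hom_Mod subgroup_imp_normal by blast

lemma quot_fgen:
  assumes "fgen G w J" "subgroup H G"
  shows "fgen (G Mod H) (\<lambda>j. H #> w j) J"
proof -
  have fJ: "finite J" and wJ: "w ` J \<subseteq> carrier G" and gen: "\<forall>x\<in>carrier G. \<exists>c. x = lcomb G w c J"
    using assms by (auto simp: fgen_def)
  have h: "(\<lambda>a. H #> a) \<in> hom G (G Mod H)" using quot_hom[OF assms(2)] .
  have "(\<lambda>j. H #> w j) ` J \<subseteq> carrier (G Mod H)" using hom_in_carrier[OF h] wJ by blast
  moreover have "\<exists>c. X1 = lcomb (G Mod H) (\<lambda>j. H #> w j) c J" if "X1 \<in> carrier (G Mod H)" for X1
  proof -
    have "X1 \<in> (\<lambda>x. H #> x) ` carrier G" using that by (simp add: carrier_FactGroup)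
    then obtain x where x: "x \<in> carrier G" "X1 = H #> x" by (rule imageE) simp
    obtain c where c: "x = lcomb G w c J" using bspec[OF gen x(1)] by (rule exE)
    have "X1 = lcomb (G Mod H) (\<lambda>j. H #> w j) c J"
      using lcomb_hom[OF quot_comm_group[OF assms(2)] h wJ, of c] x c by simp
    then show ?thesis by blast
  qed
  ultimately show ?thesis using fJ by (simp add: fgen_def)
qed

lemma quot_eq_iff:
  assumes "subgroup H G" "x \<in> carrier G" "y \<in> carrier G" "H #> x = H #> y"
  shows "\<exists>h\<in>H. x = h \<otimes> y"
proof -
  have "x \<in> H #> y" using assms rcos_self[OF assms(2,1)] by simp
  then show ?thesis unfolding r_coset_def by blast
qed

lemma quot_one_iff:
  assumes "subgroup H G" "x \<in> carrier G"
  shows "H #> x = H \<longleftrightarrow> x \<in> H"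
  using assms coset_join1 coset_join2 by blast

theorem count_hom_quot:
  fixes K :: "('k, 'e) monoid_scheme"
  assumes "subgroup H G" "comm_group K"
  shows "card {\<phi> \<in> Hom G K. \<forall>h\<in>H. \<phi> h = \<one>\<^bsub>K\<^esub>} = card (Hom (G Mod H) K)"
proof -
  interpret K: comm_group K by fact
  define Q where "Q = G Mod H"
  have Qg: "comm_group Q" unfolding Q_def using quot_comm_group[OF assms(1)] .
  interpret Q: comm_group Q by (rule Qg)
  define \<pi> where "\<pi> = (\<lambda>a. H #> a)"
  have \<pi>: "\<pi> \<in> hom G Q" unfolding \<pi>_def Q_def by (rule quot_hom[OF assms(1)])
  have carrQ: "carrier Q = \<pi> ` carrier G" by (simp add: Q_def \<pi>_def carrier_FactGroup)
  have \<pi>H: "\<pi> h = \<one>\<^bsub>Q\<^esub>" if "h \<in> H" for h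
    using that assms(1) subgroup.rcos_const[OF assms(1) is_group] by (simp add: \<pi>_def Q_def)
  have Hsub: "H \<subseteq> carrier G" using assms(1) by (rule subgroup.subset)
  define \<Psi> where "\<Psi> \<psi> = restrict (\<lambda>x. \<psi> (\<pi> x)) (carrier G)" for \<psi> :: "'a set \<Rightarrow> 'k"
  have "bij_betw \<Psi> (Hom Q K) {\<phi> \<in> Hom G K. \<forall>h\<in>H. \<phi> h = \<one>\<^bsub>K\<^esub>}"
  proof (rule bij_betwI')
    fix \<psi>1 \<psi>2 assume \<psi>: "\<psi>1 \<in> Hom Q K" "\<psi>2 \<in> Hom Q K"
    show "(\<Psi> \<psi>1 = \<Psi> \<psi>2) = (\<psi>1 = \<psi>2)"
    proof
      assume eq: "\<Psi> \<psi>1 = \<Psi> \<psi>2"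
      show "\<psi>1 = \<psi>2"
      proof (rule extensionalityI[of _ "carrier Q"])
        show "\<psi>1 \<in> extensional (carrier Q)" "\<psi>2 \<in> extensional (carrier Q)" using \<psi> by (auto simp: Hom_def)
        fix X1 assume "X1 \<in> carrier Q"
        then obtain x where x: "x \<in> carrier G" "X1 = \<pi> x" using carrQ by auto
        have "\<Psi> \<psi>1 x = \<Psi> \<psi>2 x" using eq by simp
        then show "\<psi>1 X1 = \<psi>2 X1" using x by (simp add: \<Psi>_def)
      qed
    qed simp
  next
    fix \<psi> assume \<psi>: "\<psi> \<in> Hom Q K"
    have h: "\<psi> \<in> hom Q K" using \<psi> by (simp add: Hom_def)
    have "\<Psi> \<psi> \<in> hom G K" using hom_compose[OF \<pi> h] by (simp add: \<Psi>_def compose_def)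
    moreover have "\<Psi> \<psi> \<in> extensional (carrier G)" by (simp add: \<Psi>_def)
    moreover have "\<Psi> \<psi> h = \<one>\<^bsub>K\<^esub>" if "h \<in> H" for h
    proof -
      have "\<psi> \<one>\<^bsub>Q\<^esub> = \<one>\<^bsub>K\<^esub>" using hom_one[OF h Q.is_group K.is_group] .
      then show ?thesis using that Hsub \<pi>H by (auto simp: \<Psi>_def)
    qed
    ultimately show "\<Psi> \<psi> \<in> {\<phi> \<in> Hom G K. \<forall>h\<in>H. \<phi> h = \<one>\<^bsub>K\<^esub>}" by (simp add: Hom_def)
  next
    fix \<phi> assume \<phi>: "\<phi> \<in> {\<phi> \<in> Hom G K. \<forall>h\<in>H. \<phi> h = \<one>\<^bsub>K\<^esub>}"
    then have h: "\<phi> \<in> hom G K" and ext: "\<phi> \<in> extensional (carrier G)" and kill: "\<forall>h\<in>H. \<phi> h = \<one>\<^bsub>K\<^esub>"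
      by (auto simp: Hom_def)
    have \<phi>c: "\<phi> x \<in> carrier K" if "x \<in> carrier G" for x using h that by (auto simp: hom_def)
    have wd: "\<phi> x = \<phi> y" if xy: "x \<in> carrier G" "y \<in> carrier G" "\<pi> x = \<pi> y" for x y
    proof -
      have "\<exists>h\<in>H. x = h \<otimes> y" using quot_eq_iff[OF assms(1) xy(1,2)] xy(3) by (simp add: \<pi>_def)
      then obtain k where k: "k \<in> H" "x = k \<otimes> y" by blast
      have kc: "k \<in> carrier G" using k Hsub by blast
      have "\<phi> x = \<phi> k \<otimes>\<^bsub>K\<^esub> \<phi> y" using h kc xy k by (simp add: hom_mult)
      then show ?thesis using kill k \<phi>c xy by simp
    qed
    define \<psi> where "\<psi> X1 = (if X1 \<in> carrier Q then \<phi> (SOME x. x \<in> carrier G \<and> X1 = \<pi> x) else undefined)" for X1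
    have \<psi>\<pi>: "\<psi> (\<pi> x) = \<phi> x" if x: "x \<in> carrier G" for x
    proof -
      have "\<exists>y. y \<in> carrier G \<and> \<pi> x = \<pi> y" using x by blast
      then have s: "(SOME y. y \<in> carrier G \<and> \<pi> x = \<pi> y) \<in> carrier G \<and> \<pi> x = \<pi> (SOME y. y \<in> carrier G \<and> \<pi> x = \<pi> y)"
        by (rule someI_ex)
      have "\<pi> x \<in> carrier Q" using x carrQ by auto
      then show ?thesis using wd[OF x, of "SOME y. y \<in> carrier G \<and> \<pi> x = \<pi> y"] s by (simp add: \<psi>_def)
    qed
    have \<psi>hom: "\<psi> \<in> hom Q K"
    proof (rule homI)
      fix X1 assume "X1 \<in> carrier Q"
      then obtain x where x: "x \<in> carrier G" "X1 = \<pi> x" using carrQ by auto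
      then show "\<psi> X1 \<in> carrier K" using \<psi>\<pi> \<phi>c by simp
    next
      fix X1 Y1 assume "X1 \<in> carrier Q" "Y1 \<in> carrier Q"
      then obtain x y where xy: "x \<in> carrier G" "X1 = \<pi> x" "y \<in> carrier G" "Y1 = \<pi> y" using carrQ by auto
      have "X1 \<otimes>\<^bsub>Q\<^esub> Y1 = \<pi> (x \<otimes> y)" using xy \<pi> by (simp add: hom_mult)
      then show "\<psi> (X1 \<otimes>\<^bsub>Q\<^esub> Y1) = \<psi> X1 \<otimes>\<^bsub>K\<^esub> \<psi> Y1" using xy \<psi>\<pi> h by (simp add: hom_mult)
    qed
    have "\<psi> \<in> Hom Q K" using \<psi>hom by (simp add: Hom_def \<psi>_def extensional_def)
    moreover have "\<Psi> \<psi> = \<phi>"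
    proof (rule extensionalityI[of _ "carrier G"])
      show "\<Psi> \<psi> \<in> extensional (carrier G)" by (simp add: \<Psi>_def)
      show "\<phi> \<in> extensional (carrier G)" by (rule ext)
      fix x assume "x \<in> carrier G"
      then show "\<Psi> \<psi> x = \<phi> x" using \<psi>\<pi> by (simp add: \<Psi>_def)
    qed
    ultimately show "\<exists>\<psi>\<in>Hom Q K. \<phi> = \<Psi> \<psi>" by blast
  qed
  then show ?thesis unfolding Q_def by (simp add: bij_betw_same_card)
qed

end




context comm_group
begin

lemma rank_maximal:
  assumes bdd: "\<And>m f. (\<forall>i<m. f i \<in> S) \<Longrightarrow> int_indep G m f \<Longrightarrow> m \<le> Bd"
    and S: "S \<subseteq> carrier G" and f: "\<forall>i<grp_rank G S. f i \<in> S" "int_indep G (grp_rank G S) f"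
    and x: "x \<in> S"
  shows "\<exists>m c. m \<noteq> 0 \<and> x [^] (m::int) = lcomb G f c {..<grp_rank G S}"
proof -
  define r where "r = grp_rank G S"
  define E where "E = {..<r}"
  have rk2: "m \<le> r" if "\<forall>i<m. g i \<in> S" "int_indep G m g" for m g
    unfolding r_def by (rule rank_props(2)[OF _ that]) (rule bdd)
  have xc: "x \<in> carrier G" using x S by blast
  have eE: "f ` E \<subseteq> carrier G" using f S by (auto simp: E_def r_def)
  have indE: "indep G f E" using f by (simp add: int_indep_iff E_def r_def)
  define e' where "e' = f(r := x)"
  have "\<not> int_indep G (Suc r) e'"
  proof
    assume "int_indep G (Suc r) e'"
    moreover have "\<forall>i<Suc r. e' i \<in> S" using f x by (auto simp: e'_def less_Suc_eq r_def)
    ultimately have "Suc r \<le> r" by (rule rk2[rotated])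
    then show False by simp
  qed
  then obtain c where c: "lcomb G e' c {..<Suc r} = \<one>" "\<exists>i\<in>{..<Suc r}. c i \<noteq> 0"
    unfolding int_indep_iff indep_def by blast
  have e'E: "e' ` insert r E \<subseteq> carrier G" using eE xc by (auto simp: e'_def E_def)
  have "lcomb G e' c {..<Suc r} = x [^] c r \<otimes> lcomb G e' c E"
    using e'E by (simp add: lessThan_Suc E_def lcomb_insert e'_def)
  also have "lcomb G e' c E = lcomb G f c E"
    using eE by (intro lcomb_cong2) (auto simp: e'_def E_def)
  finally have eq: "x [^] c r \<otimes> lcomb G f c E = \<one>" using c by simp
  have cr: "c r \<noteq> 0"
  proof
    assume "c r = 0"
    then have "lcomb G f c E = \<one>" using eq eE by simp
    then have "\<forall>i\<in>E. c i = 0" using indE unfolding indep_def by blast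
    with c(2) \<open>c r = 0\<close> show False by (auto simp: E_def less_Suc_eq)
  qed
  have "x [^] c r = inv (lcomb G f c E)"
    using eq eE xc by (metis inv_equality inv_inv lcomb_closed int_pow_closed inv_closed)
  also have "\<dots> = lcomb G f (\<lambda>i. - c i) E" using eE by (simp add: lcomb_neg)
  finally show ?thesis using cr unfolding E_def r_def by blast
qed

lemma lcomb_split:
  fixes a q :: nat
  assumes "z ` {..<a + q} \<subseteq> carrier G"
  shows "lcomb G z c {..<a + q} = lcomb G z c {..<a} \<otimes> lcomb G (\<lambda>j. z (a + j)) (\<lambda>j. c (a + j)) {..<q}"
  using assms
proof (induction q)
  case 0
  have "lcomb G z c {..<a} \<in> carrier G" using 0 by auto
  then show ?case by simp
next
  case (Suc q)
  have z1: "z ` {..<a + q} \<subseteq> carrier G" using Suc.prems by auto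
  have za: "z (a + q) \<in> carrier G" using Suc.prems by auto
  have "lcomb G z c {..<a + Suc q} = z (a + q) [^] c (a + q) \<otimes> lcomb G z c {..<a + q}"
    using Suc.prems by (simp add: lessThan_Suc lcomb_insert)
  also have "\<dots> = z (a + q) [^] c (a + q) \<otimes> (lcomb G z c {..<a} \<otimes> lcomb G (\<lambda>j. z (a + j)) (\<lambda>j. c (a + j)) {..<q})"
    using Suc.IH[OF z1] by simp
  also have "\<dots> = lcomb G z c {..<a} \<otimes> (z (a + q) [^] c (a + q) \<otimes> lcomb G (\<lambda>j. z (a + j)) (\<lambda>j. c (a + j)) {..<q})"
    using z1 za by (simp add: m_lcomm image_subset_iff)
  also have "z (a + q) [^] c (a + q) \<otimes> lcomb G (\<lambda>j. z (a + j)) (\<lambda>j. c (a + j)) {..<q}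
      = lcomb G (\<lambda>j. z (a + j)) (\<lambda>j. c (a + j)) {..<Suc q}"
    using Suc.prems by (simp add: lessThan_Suc lcomb_insert image_subset_iff)
  finally show ?case .
qed

end




context comm_group
begin

theorem rank_add:
  assumes fg: "fgen G w J" and H: "subgroup H G"
  shows "grp_rank G (carrier G) = grp_rank G H + grp_rank (G Mod H) (carrier (G Mod H))"
proof -
  define Q where "Q = G Mod H"
  have Qg: "comm_group Q" unfolding Q_def using quot_comm_group[OF H] .
  interpret Q: comm_group Q by (rule Qg)
  have Qfg: "fgen Q (\<lambda>j. H #> w j) J" unfolding Q_def by (rule quot_fgen[OF fg H])
  define \<pi> where "\<pi> = (\<lambda>a. H #> a)"
  have \<pi>: "\<pi> \<in> hom G Q" unfolding \<pi>_def Q_def by (rule quot_hom[OF H])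
  interpret gh: group_hom G Q \<pi> using \<pi> by (simp add: group_hom_def group_hom_axioms_def is_group Q.is_group)
  have carrQ: "carrier Q = \<pi> ` carrier G" by (simp add: Q_def \<pi>_def carrier_FactGroup)
  have Hsub: "H \<subseteq> carrier G" using H by (rule subgroup.subset)
  have \<pi>H: "\<pi> h = \<one>\<^bsub>Q\<^esub> \<longleftrightarrow> h \<in> H" if "h \<in> carrier G" for h
    using quot_one_iff[OF H that] by (simp add: \<pi>_def Q_def)
  define a where "a = grp_rank G H"
  define q where "q = grp_rank Q (carrier Q)"
  have bddH: "\<And>m f. (\<forall>i<m. f i \<in> H) \<Longrightarrow> int_indep G m f \<Longrightarrow> m \<le> card J"
    by (rule fgen_bdd[OF fg Hsub])
  have bddQ: "\<And>m f. (\<forall>i<m. f i \<in> carrier Q) \<Longrightarrow> int_indep Q m f \<Longrightarrow> m \<le> card J"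
    by (rule Q.fgen_bdd[OF Qfg subset_refl])
  have bddG: "\<And>m f. (\<forall>i<m. f i \<in> carrier G) \<Longrightarrow> int_indep G m f \<Longrightarrow> m \<le> card J"
    by (rule fgen_bdd[OF fg subset_refl])
  have "\<exists>f. (\<forall>i<grp_rank G H. f i \<in> H) \<and> int_indep G (grp_rank G H) f"
    by (rule rank_props(1)) (rule bddH)
  then obtain f where f: "\<forall>i<a. f i \<in> H" "int_indep G a f" unfolding a_def by blast
  have "\<exists>g. (\<forall>i<grp_rank Q (carrier Q). g i \<in> carrier Q) \<and> int_indep Q (grp_rank Q (carrier Q)) g"
    by (rule rank_props(1)) (rule bddQ)
  then obtain g where g: "\<forall>i<q. g i \<in> carrier Q" "int_indep Q q g" unfolding q_def by blast
  have maxH: "\<exists>m c. m \<noteq> 0 \<and> x [^] (m::int) = lcomb G f c {..<a}" if "x \<in> H" for x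
    unfolding a_def by (rule rank_maximal[OF bddH Hsub f[unfolded a_def] that])
  have maxQ: "\<exists>m c. m \<noteq> 0 \<and> X1 [^]\<^bsub>Q\<^esub> (m::int) = lcomb Q g c {..<q}" if "X1 \<in> carrier Q" for X1
    unfolding q_def by (rule Q.rank_maximal[OF bddQ subset_refl g[unfolded q_def] that])
  define y where "y j = (SOME y. y \<in> carrier G \<and> g j = \<pi> y)" for j
  have y: "y j \<in> carrier G \<and> g j = \<pi> (y j)" if "j < q" for j
  proof -
    have "g j \<in> \<pi> ` carrier G" using g that carrQ by auto
    then obtain x where "x \<in> carrier G" "g j = \<pi> x" by (rule imageE) simp
    then have "x \<in> carrier G \<and> g j = \<pi> x" by simp
    then show ?thesis unfolding y_def by (rule someI)
  qed
  have fc: "f ` {..<a} \<subseteq> carrier G" using f Hsub by auto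
  have yc: "y ` {..<q} \<subseteq> carrier G" using y by auto
  have gc: "g ` {..<q} \<subseteq> carrier Q" using g by auto
  define z where "z i = (if i < a then f i else y (i - a))" for i
  have zc: "z ` {..<a + q} \<subseteq> carrier G" using fc yc by (auto simp: z_def)
  have zsplit: "lcomb G z c {..<a + q} = lcomb G f c {..<a} \<otimes> lcomb G y (\<lambda>j. c (a + j)) {..<q}" for c
  proof -
    have "lcomb G z c {..<a + q} = lcomb G z c {..<a} \<otimes> lcomb G (\<lambda>j. z (a + j)) (\<lambda>j. c (a + j)) {..<q}"
      by (rule lcomb_split[OF zc])
    also have "lcomb G z c {..<a} = lcomb G f c {..<a}"
      using fc by (intro lcomb_cong2) (auto simp: z_def)
    also have "lcomb G (\<lambda>j. z (a + j)) (\<lambda>j. c (a + j)) {..<q} = lcomb G y (\<lambda>j. c (a + j)) {..<q}"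
      using yc by (intro lcomb_cong2) (auto simp: z_def)
    finally show ?thesis .
  qed
  have \<pi>y: "\<pi> (lcomb G y d {..<q}) = lcomb Q g d {..<q}" for d
  proof -
    have "\<pi> (lcomb G y d {..<q}) = lcomb Q (\<lambda>j. \<pi> (y j)) d {..<q}"
      by (rule lcomb_hom[OF Qg \<pi> yc])
    also have "\<dots> = lcomb Q g d {..<q}"
      using gc y by (intro Q.lcomb_cong2) auto
    finally show ?thesis .
  qed
  have \<pi>f: "\<pi> (lcomb G f d {..<a}) = \<one>\<^bsub>Q\<^esub>" for d
  proof -
    have "lcomb G f d {..<a} \<in> H" using f by (intro lcomb_subgroup[OF H]) auto
    then show ?thesis using \<pi>H Hsub by blast
  qed
  have indz: "indep G z {..<a + q}" unfolding indep_def
  proof (intro allI impI ballI)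
    fix c i assume c: "lcomb G z c {..<a + q} = \<one>" and i: "i \<in> {..<a + q}"
    have Lf: "lcomb G f c {..<a} \<in> carrier G" and Ly: "lcomb G y (\<lambda>j. c (a + j)) {..<q} \<in> carrier G"
      using fc yc by auto
    have "\<one>\<^bsub>Q\<^esub> = \<pi> (lcomb G f c {..<a} \<otimes> lcomb G y (\<lambda>j. c (a + j)) {..<q})"
      using c zsplit[of c] by simp
    also have "\<dots> = lcomb Q g (\<lambda>j. c (a + j)) {..<q}"
      using Lf Ly \<pi>f \<pi>y gc by simp
    finally have "\<forall>j\<in>{..<q}. c (a + j) = 0"
      using g(2) unfolding int_indep_iff indep_def by (metis (no_types, lifting))
    then have "lcomb G y (\<lambda>j. c (a + j)) {..<q} = lcomb G y (\<lambda>_. 0) {..<q}"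
      using yc by (intro lcomb_cong) auto
    then have "lcomb G f c {..<a} = \<one>" using c zsplit[of c] Lf by simp
    then have "\<forall>j\<in>{..<a}. c j = 0" using f(2) unfolding int_indep_iff indep_def by blast
    moreover have "i < a \<or> (\<exists>j<q. i = a + j)"
    proof (cases "i < a")
      case False
      then show ?thesis using i by (intro disjI2 exI[of _ "i - a"]) auto
    qed simp
    ultimately show "c i = 0" using \<open>\<forall>j\<in>{..<q}. c (a + j) = 0\<close> by auto
  qed
  have le1: "a + q \<le> grp_rank G (carrier G)"
    using rank_ge[OF bddG subset_refl _ zc indz] by simp
  have "\<exists>e. (\<forall>i<grp_rank G (carrier G). e i \<in> carrier G) \<and> int_indep G (grp_rank G (carrier G)) e"
    by (rule rank_props(1)) (rule bddG)
  then obtain e where e: "\<forall>i<grp_rank G (carrier G). e i \<in> carrier G" "int_indep G (grp_rank G (carrier G)) e"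
    by blast
  have pw: "\<exists>n c. n \<noteq> 0 \<and> x [^] (n::int) = lcomb G z c {..<a + q}" if x: "x \<in> carrier G" for x
  proof -
    have "\<pi> x \<in> carrier Q" using x carrQ by auto
    then obtain m1 d where md: "m1 \<noteq> 0" "\<pi> x [^]\<^bsub>Q\<^esub> (m1::int) = lcomb Q g d {..<q}" using maxQ by blast
    define Ly where "Ly = lcomb G y d {..<q}"
    have Ly: "Ly \<in> carrier G" using yc by (simp add: Ly_def)
    define u where "u = x [^] m1 \<otimes> inv Ly"
    have u: "u \<in> carrier G" using x Ly by (simp add: u_def)
    have "\<pi> u = \<pi> x [^]\<^bsub>Q\<^esub> m1 \<otimes>\<^bsub>Q\<^esub> inv\<^bsub>Q\<^esub> (\<pi> Ly)"
      using x Ly by (simp add: u_def gh.hom_int_pow)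
    also have "\<dots> = \<one>\<^bsub>Q\<^esub>" using md \<pi>y[of d] gc by (simp add: Ly_def)
    finally have "u \<in> H" using \<pi>H u by blast
    then obtain m2 e' where me: "m2 \<noteq> 0" "u [^] (m2::int) = lcomb G f e' {..<a}" using maxH by blast
    have "x [^] m1 = u \<otimes> Ly" using x Ly by (simp add: u_def m_assoc)
    then have "x [^] (m1 * m2) = (u \<otimes> Ly) [^] m2" using x by (simp add: int_pow_pow[symmetric])
    also have "\<dots> = u [^] m2 \<otimes> Ly [^] m2" using u Ly by (simp add: int_pow_distrib)
    also have "\<dots> = lcomb G f e' {..<a} \<otimes> lcomb G y (\<lambda>j. m2 * d j) {..<q}"
      using me yc by (simp add: Ly_def lcomb_pow)
    also have "\<dots> = lcomb G z (\<lambda>i. if i < a then e' i else m2 * d (i - a)) {..<a + q}"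
    proof -
      have "lcomb G f e' {..<a} = lcomb G f (\<lambda>i. if i < a then e' i else m2 * d (i - a)) {..<a}"
        using fc by (intro lcomb_cong) auto
      moreover have "lcomb G y (\<lambda>j. m2 * d j) {..<q} = lcomb G y (\<lambda>j. (\<lambda>i. if i < a then e' i else m2 * d (i - a)) (a + j)) {..<q}"
        using yc by (intro lcomb_cong) auto
      ultimately show ?thesis using zsplit by simp
    qed
    finally show ?thesis using md(1) me(1) by (intro exI[of _ "m1 * m2"]) auto
  qed
  have le2: "grp_rank G (carrier G) \<le> a + q"
  proof -
    have "card {..<grp_rank G (carrier G)} \<le> card {..<a + q}"
      using e pw zc by (intro indep_card_le'[where x = e and w = z]) (auto simp: int_indep_iff)
    then show ?thesis by simp
  qed
  show ?thesis using le1 le2 unfolding a_def q_def Q_def by simp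
qed

end




lemma incl_excl:
  fixes P :: "nat \<Rightarrow> 'x \<Rightarrow> bool"
  assumes "finite XS"
  shows "int (card {x\<in>XS. \<forall>i<n. \<not> P i x}) = (\<Sum>I\<in>Pow {..<n}. (-1) ^ card I * int (card {x\<in>XS. \<forall>i\<in>I. P i x}))"
  using assms
proof (induction n arbitrary: XS)
  case 0
  then show ?case by simp
next
  case (Suc n)
  define XS' where "XS' = {x\<in>XS. \<forall>i<n. \<not> P i x}"
  define Xn where "Xn = {x\<in>XS. P n x}"
  have fX': "finite XS'" using Suc.prems by (simp add: XS'_def)
  have fXn: "finite Xn" using Suc.prems by (simp add: Xn_def)
  have e1: "{x\<in>XS. \<forall>i<Suc n. \<not> P i x} = XS' - {x\<in>XS'. P n x}"
    by (auto simp: XS'_def less_Suc_eq)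
  have e2: "{x\<in>XS'. P n x} = {x\<in>Xn. \<forall>i<n. \<not> P i x}" by (auto simp: XS'_def Xn_def)
  have "int (card {x\<in>XS. \<forall>i<Suc n. \<not> P i x}) = int (card XS') - int (card {x\<in>XS'. P n x})"
    unfolding e1 using fX' by (simp add: card_Diff_subset of_nat_diff card_mono)
  also have "\<dots> = (\<Sum>I\<in>Pow {..<n}. (-1) ^ card I * int (card {x\<in>XS. \<forall>i\<in>I. P i x}))
      - (\<Sum>I\<in>Pow {..<n}. (-1) ^ card I * int (card {x\<in>Xn. \<forall>i\<in>I. P i x}))"
  proof -
    have "int (card XS') = (\<Sum>I\<in>Pow {..<n}. (-1) ^ card I * int (card {x\<in>XS. \<forall>i\<in>I. P i x}))"
      unfolding XS'_def by (rule Suc.IH[OF Suc.prems])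
    moreover have "int (card {x\<in>XS'. P n x}) = (\<Sum>I\<in>Pow {..<n}. (-1) ^ card I * int (card {x\<in>Xn. \<forall>i\<in>I. P i x}))"
      unfolding e2 by (rule Suc.IH[OF fXn])
    ultimately show ?thesis by simp
  qed
  also have "\<dots> = (\<Sum>I\<in>Pow {..<Suc n}. (-1) ^ card I * int (card {x\<in>XS. \<forall>i\<in>I. P i x}))"
  proof -
    have disj: "Pow {..<n} \<inter> insert n ` Pow {..<n} = {}" by auto
    have inj: "inj_on (insert n) (Pow {..<n})"
    proof (rule inj_onI)
      fix A B assume "A \<in> Pow {..<n}" "B \<in> Pow {..<n}" "insert n A = insert n B"
      then show "A = B" by (metis Diff_insert_absorb PowD lessThan_iff less_irrefl subsetD)
    qed
    have "(\<Sum>I\<in>Pow {..<Suc n}. (-1) ^ card I * int (card {x\<in>XS. \<forall>i\<in>I. P i x}))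
        = (\<Sum>I\<in>Pow {..<n}. (-1) ^ card I * int (card {x\<in>XS. \<forall>i\<in>I. P i x}))
          + (\<Sum>I\<in>insert n ` Pow {..<n}. (-1) ^ card I * int (card {x\<in>XS. \<forall>i\<in>I. P i x}))"
      by (simp add: lessThan_Suc Pow_insert sum.union_disjoint disj)
    also have "(\<Sum>I\<in>insert n ` Pow {..<n}. (-1) ^ card I * int (card {x\<in>XS. \<forall>i\<in>I. P i x}))
        = (\<Sum>I\<in>Pow {..<n}. (-1) ^ card (insert n I) * int (card {x\<in>XS. \<forall>i\<in>insert n I. P i x}))"
      by (simp add: sum.reindex[OF inj])
    also have "\<dots> = (\<Sum>I\<in>Pow {..<n}. - ((-1) ^ card I * int (card {x\<in>Xn. \<forall>i\<in>I. P i x})))"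
    proof (rule sum.cong[OF refl])
      fix I assume I: "I \<in> Pow {..<n}"
      then have "finite I" "n \<notin> I" by (auto intro: finite_subset)
      then have "card (insert n I) = Suc (card I)" by simp
      moreover have "{x\<in>XS. \<forall>i\<in>insert n I. P i x} = {x\<in>Xn. \<forall>i\<in>I. P i x}" by (auto simp: Xn_def)
      ultimately show "(-1) ^ card (insert n I) * int (card {x\<in>XS. \<forall>i\<in>insert n I. P i x})
          = - ((-1) ^ card I * int (card {x\<in>Xn. \<forall>i\<in>I. P i x}))" by simp
    qed
    finally show ?thesis by (simp add: sum_negf)
  qed
  finally show ?case .
qed




lemma kill_generate:
  fixes K :: "('k, 'e) monoid_scheme"
  assumes "group \<Gamma>" "group K" "\<phi> \<in> hom \<Gamma> K" "S \<subseteq> carrier \<Gamma>" "\<forall>s\<in>S. \<phi> s = \<one>\<^bsub>K\<^esub>"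
    and "h \<in> generate \<Gamma> S"
  shows "\<phi> h = \<one>\<^bsub>K\<^esub>"
  using assms(6)
proof (induction rule: generate.induct)
  case one
  then show ?case using hom_one[OF assms(3,1,2)] by simp
next
  case (incl h)
  then show ?case using assms(5) by simp
next
  case (inv h)
  interpret gh: group_hom \<Gamma> K \<phi> using assms by (simp add: group_hom_def group_hom_axioms_def)
  have "h \<in> carrier \<Gamma>" using inv assms(4) by auto
  then show ?case using inv assms(5) by simp
next
  case (eng h1 h2)
  have "h1 \<in> carrier \<Gamma>" "h2 \<in> carrier \<Gamma>"
    using eng.hyps group.generate_in_carrier[OF assms(1,4)] by auto
  then show ?case using eng.IH assms(2,3) by (simp add: hom_mult group.is_monoid monoid.l_one)
qed

theorem mainTheorem10:
  fixes \<Gamma> :: "('a, 'b) monoid_scheme" and G :: "('c, 'd) monoid_scheme" and \<A> :: "'a list"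
  assumes "comm_group \<Gamma>" and "fin_gen \<Gamma>" and "set \<A> \<subseteq> carrier \<Gamma>"
    and "comm_group G" and "finite (carrier G)"
  shows "int (card (M_set \<A> \<Gamma> G)) = poly (char_poly \<A> \<Gamma> G) (int (card (carrier G)))"
proof -
  interpret \<Gamma>: comm_group \<Gamma> by fact
  interpret K: comm_group G by fact
  obtain J where fg: "fgen \<Gamma> id J" using \<Gamma>.fin_gen_fgen[OF assms(2)] by blast
  define n where "n = length \<A>"
  define Hm where "Hm = Hom \<Gamma> G"
  define g where "g = card (carrier G)"
  have J: "finite J" "id ` J \<subseteq> carrier \<Gamma>" "\<forall>x\<in>carrier \<Gamma>. \<exists>c. x = lcomb \<Gamma> id c J"
    using fg by (auto simp: fgen_def)
  have finHm: "finite Hm"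
  proof -
    have "inj_on (\<lambda>\<phi>. restrict \<phi> J) Hm"
    proof (rule inj_onI)
      fix \<phi>1 \<phi>2 assume \<phi>: "\<phi>1 \<in> Hm" "\<phi>2 \<in> Hm" and eq: "restrict \<phi>1 J = restrict \<phi>2 J"
      have h: "\<phi>1 \<in> hom \<Gamma> G" "\<phi>2 \<in> hom \<Gamma> G" using \<phi> by (auto simp: Hm_def Hom_def)
      show "\<phi>1 = \<phi>2"
      proof (rule extensionalityI[of _ "carrier \<Gamma>"])
        show "\<phi>1 \<in> extensional (carrier \<Gamma>)" "\<phi>2 \<in> extensional (carrier \<Gamma>)" using \<phi> by (auto simp: Hm_def Hom_def)
        fix x assume x: "x \<in> carrier \<Gamma>"
        obtain c where c: "x = lcomb \<Gamma> id c J" using bspec[OF J(3) x] by (rule exE)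
        have eqJ: "\<phi>1 j = \<phi>2 j" if "j \<in> J" for j using eq that by (metis restrict_apply')
        have "\<phi>1 x = lcomb G (\<lambda>j. \<phi>1 (id j)) c J" using \<Gamma>.lcomb_hom[OF assms(4) h(1) J(2)] c by simp
        also have "\<dots> = lcomb G (\<lambda>j. \<phi>2 (id j)) c J"
          using eqJ J(2) hom_in_carrier[OF h(2)] by (intro K.lcomb_cong2) auto
        also have "\<dots> = \<phi>2 x" using \<Gamma>.lcomb_hom[OF assms(4) h(2) J(2)] c by simp
        finally show "\<phi>1 x = \<phi>2 x" .
      qed
    qed
    moreover have "(\<lambda>\<phi>. restrict \<phi> J) ` Hm \<subseteq> (\<Pi>\<^sub>E j\<in>J. carrier G)"
      using J(2) by (auto simp: Hm_def Hom_def intro: hom_in_carrier; meson hom_in_carrier subsetD)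
    moreover have "finite (\<Pi>\<^sub>E j\<in>J. carrier G)" using J(1) assms(5) by (intro finite_PiE) auto
    ultimately show ?thesis by (rule inj_on_finite)
  qed
  have Mset: "M_set \<A> \<Gamma> G = {\<phi>\<in>Hm. \<forall>i<n. \<not> (\<phi> (\<A> ! i) = \<one>\<^bsub>G\<^esub>)}"
    by (auto simp: M_set_def Hm_def n_def in_set_conv_nth; metis nth_mem)
  have trm: "int (card {\<phi>\<in>Hm. \<forall>i\<in>I. \<phi> (\<A> ! i) = \<one>\<^bsub>G\<^esub>})
      = int (m_count \<A> \<Gamma> G I) * int g ^ (grp_rank \<Gamma> (carrier \<Gamma>) - grp_rank \<Gamma> (sub_span \<A> \<Gamma> I))"
    if I: "I \<in> Pow {..<n}" for I
  proof -
    define S where "S = (\<lambda>i. \<A> ! i) ` I"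
    have Sc: "S \<subseteq> carrier \<Gamma>"
    proof
      fix s assume "s \<in> S"
      then obtain i where "i \<in> I" "s = \<A> ! i" by (auto simp: S_def)
      then have "i < length \<A>" "s = \<A> ! i" using I by (auto simp: n_def)
      then show "s \<in> carrier \<Gamma>" using assms(3) nth_mem by blast
    qed
    define Hs where "Hs = sub_span \<A> \<Gamma> I"
    have Hs: "Hs = generate \<Gamma> S" by (simp add: Hs_def sub_span_def S_def)
    have sub: "subgroup Hs \<Gamma>" unfolding Hs by (rule \<Gamma>.generate_is_subgroup[OF Sc])
    have seteq: "{\<phi>\<in>Hm. \<forall>i\<in>I. \<phi> (\<A> ! i) = \<one>\<^bsub>G\<^esub>} = {\<phi> \<in> Hom \<Gamma> G. \<forall>h\<in>Hs. \<phi> h = \<one>\<^bsub>G\<^esub>}"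
    proof (intro equalityI subsetI)
      fix \<phi> assume "\<phi> \<in> {\<phi>\<in>Hm. \<forall>i\<in>I. \<phi> (\<A> ! i) = \<one>\<^bsub>G\<^esub>}"
      then have \<phi>: "\<phi> \<in> Hom \<Gamma> G" "\<forall>s\<in>S. \<phi> s = \<one>\<^bsub>G\<^esub>" by (auto simp: Hm_def S_def)
      have "\<phi> h = \<one>\<^bsub>G\<^esub>" if "h \<in> Hs" for h
        using kill_generate[OF \<Gamma>.is_group K.is_group _ Sc \<phi>(2)] \<phi>(1) that unfolding Hs by (simp add: Hom_def)
      then show "\<phi> \<in> {\<phi> \<in> Hom \<Gamma> G. \<forall>h\<in>Hs. \<phi> h = \<one>\<^bsub>G\<^esub>}" using \<phi> by simp
    next
      fix \<phi> assume \<phi>: "\<phi> \<in> {\<phi> \<in> Hom \<Gamma> G. \<forall>h\<in>Hs. \<phi> h = \<one>\<^bsub>G\<^esub>}"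
      have "\<A> ! i \<in> Hs" if "i \<in> I" for i unfolding Hs S_def using that by (intro generate.incl) auto
      then show "\<phi> \<in> {\<phi>\<in>Hm. \<forall>i\<in>I. \<phi> (\<A> ! i) = \<one>\<^bsub>G\<^esub>}" using \<phi> by (auto simp: Hm_def)
    qed
    define Q where "Q = \<Gamma> Mod Hs"
    have Qc: "comm_group Q" unfolding Q_def by (rule \<Gamma>.quot_comm_group[OF sub])
    have Qfg: "fgen Q (\<lambda>j. Hs #>\<^bsub>\<Gamma>\<^esub> id j) J" unfolding Q_def by (rule \<Gamma>.quot_fgen[OF fg sub])
    have "card {\<phi>\<in>Hm. \<forall>i\<in>I. \<phi> (\<A> ! i) = \<one>\<^bsub>G\<^esub>} = card (Hom Q G)"
      unfolding seteq Q_def by (rule \<Gamma>.count_hom_quot[OF sub assms(4)])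
    also have "\<dots> = card (Hom (Q\<lparr>carrier := torsion_subgroup Q\<rparr>) G) * g ^ grp_rank Q (carrier Q)"
      unfolding g_def by (rule comm_group.count_hom[OF Qc Qfg assms(4)])
    also have "card (Hom (Q\<lparr>carrier := torsion_subgroup Q\<rparr>) G) = m_count \<A> \<Gamma> G I"
      by (simp add: m_count_def Q_def Hs_def Let_def)
    also have "grp_rank Q (carrier Q) = grp_rank \<Gamma> (carrier \<Gamma>) - grp_rank \<Gamma> (sub_span \<A> \<Gamma> I)"
      using \<Gamma>.rank_add[OF fg sub] by (simp add: Q_def Hs_def)
    finally show ?thesis by simp
  qed
  have "int (card (M_set \<A> \<Gamma> G))
      = (\<Sum>I\<in>Pow {..<n}. (-1) ^ card I * int (card {\<phi>\<in>Hm. \<forall>i\<in>I. \<phi> (\<A> ! i) = \<one>\<^bsub>G\<^esub>}))"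
    unfolding Mset by (rule incl_excl[OF finHm])
  also have "\<dots> = (\<Sum>I\<in>Pow {..<n}. (-1) ^ card I * (int (m_count \<A> \<Gamma> G I) * int g ^ (grp_rank \<Gamma> (carrier \<Gamma>) - grp_rank \<Gamma> (sub_span \<A> \<Gamma> I))))"
    by (rule sum.cong[OF refl]) (simp add: trm)
  also have "\<dots> = poly (char_poly \<A> \<Gamma> G) (int g)"
    by (simp add: char_poly_def poly_sum poly_monom n_def mult.assoc)
  finally show ?thesis by (simp add: g_def)
qed



end
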